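(* Let $\mathbf{A}$, $\mathbf{B}$ be $\sigma$-structures. The following are equivalent: (1) there exist matrices $P\in\mathbb{R}^{B\times A}$ and $Q\in\mathbb{R}^{\mathcal{C}_\mathbf{B}\times\mathcal{C}_\mathbf{A}}$, both doubly stochastic, such that for every $\ell\in\mathcal{L}_\sigma$ it holds that $P M^{\ell}_{\mathbf{A}}=M^{\ell}_{\mathbf{B}}Q$ and $M^{\ell}_{\mathbf{A}}Q^T=P^T M^{\ell}_{\mathbf{B}}$; (2) $\mathbf{A}$ and $\mathbf{B}$ have the same iterated degree sequence; (3) $\mathbf{A}$ and $\mathbf{B}$ have a common equitable partition. If, additionally, $\mathbf{A}$ and $\mathbf{B}$ are graphs, then the following is also equivalent to (1)–(3): (4) there exists a doubly stochastic matrix $P\in\mathbb{R}^{B\times A}$ such that $P N_{\mathbf{A}}=N_{\mathbf{B}}P$, where $N_\mathbf{A}$, $N_\mathbf{B}$ are the adjacency matrices of $\mathbf{A}$, $\mathbf{B}$.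
   Context: A signature $\sigma$ is a finite set of relation symbols $R$, each with an arity $\operatorname{ar}(R)\ge 1$. A $\sigma$-structure $\mathbf{A}$ consists of a finite universe $A$ and, for each $R\in\sigma$, a non-empty relation $R^{\mathbf{A}}\subseteq A^{\operatorname{ar}(R)}$. For a tuple $\mathbf{a}$, $a_i$ denotes its $i$-th entry and $\{\mathbf{a}\}$ the set of its entries. The constraint set of $\mathbf{A}$ is $\mathcal{C}_\mathbf{A}=\{R(\mathbf{a}) : R\in\sigma,\ \mathbf{a}\in R^{\mathbf{A}}\}$, where $R(\mathbf{a})$ are formal symbols. Let $\mathcal{L}_\sigma=\{(S,R): R\in\sigma,\ S\subseteq[\operatorname{ar}(R)]\}$. The factor graph of $\mathbf{A}$ is the bipartite graph with vertex set $A\cup\mathcal{C}_\mathbf{A}$ (disjoint union) and edges $\{a,R(\mathbf{a})\}$ whenever $a\in\{\mathbf{a}\}$; such an edge has label $(S,R)$ with $S=\{i: a_i=a\}$. Iterated degrees: $\delta^{\mathbf{A}}_0(v)$ is one of two fixed symbols according to whether $v\in A$ or $v\in\mathcal{C}_\mathbf{A}$; for $j\ge1$, $\delta^{\mathbf{A}}_j(v)$ is the multiset $\{\{(\ell_{\{v,w\}},\delta^{\mathbf{A}}_{j-1}(w)) : w \text{ adjacent to } v\}\}$ where $\ell_{\{v,w\}}$ is the edge label; $\delta^{\mathbf{A}}(v)=(\delta^{\mathbf{A}}_0(v),\delta^{\mathbf{A}}_1(v),\dots)$. The iterated degree sequence of $\mathbf{A}$ is the multiset $\{\{\delta^{\mathbf{A}}(v):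 v\in A\cup\mathcal{C}_\mathbf{A}\}\}$. The matrix $M_\mathbf{A}\in\mathcal{L}_\sigma^{A\times\mathcal{C}_\mathbf{A}}$ has $M_\mathbf{A}[a,R(\mathbf{a})]=(S,R)$ with $S=\{i\in[\operatorname{ar}(R)]: a_i=a\}$ (possibly $S=\emptyset$); for $\ell\in\mathcal{L}_\sigma$, $M^\ell_\mathbf{A}\in\{0,1\}^{A\times\mathcal{C}_\mathbf{A}}$ has entry $1$ exactly where $M_\mathbf{A}$ equals $\ell$. A doubly stochastic matrix is a non-negative matrix all of whose row sums and column sums equal $1$ (in particular its row and column index sets have the same size). A partition of $\mathbf{A}$ is a pair $(\{\mathcal{P}_i\}_{i\in I},\{\mathcal{Q}_j\}_{j\in J})$ of a partition of $A$ and a partition of $\mathcal{C}_\mathbf{A}$. It is equitable if there are integers $c^\ell_{i,j},d^\ell_{j,i}$ (the parameters) such that for all $i,j,\ell$: every $a\in\mathcal{P}_i$ satisfies $|\{R(\mathbf{a})\in\mathcal{Q}_j: M_\mathbf{A}[a,R(\mathbf{a})]=\ell\}|=c^\ell_{i,j}$, and every $R(\mathbf{a})\in\mathcal{Q}_j$ satisfies $|\{a\in\mathcal{P}_i: M_\mathbf{A}[a,R(\mathbf{a})]=\ell\}|=d^\ell_{j,i}$. Two structures $\mathbf{A},\mathbf{B}$ have a common equitable partition if they have equitable partitions $(\{\mathcal{P}^\mathbf{A}_i\}_{i\in I},\{\mathcal{Q}^\mathbf{A}_j\}_{j\in J})$, $(\{\mathcal{P}^\mathbf{B}_i\}_{i\in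 I},\{\mathcal{Q}^\mathbf{B}_j\}_{j\in J})$ with the same parameters and $|\mathcal{P}^\mathbf{A}_i|=|\mathcal{P}^\mathbf{B}_i|$, $|\mathcal{Q}^\mathbf{A}_j|=|\mathcal{Q}^\mathbf{B}_j|$ for all $i,j$. A graph is a structure whose signature consists of one binary relation symbol interpreted as a symmetric irreflexive relation. *)

theory Defs
  imports Complex_Main "HOL-Library.Multiset"
begin

(* A signature is given by a set sig :: 'r set of relation symbols and an arity
   function ar :: 'r => nat.  Tuples are lists; positions are 0-based,
   i.e. [ar R] is rendered as {..<ar R}. *)

record ('r, 'a) struc =
  univ :: "'a set"
  rels :: "'r \<Rightarrow> 'a list set"

definition is_signature :: "'r set \<Rightarrow> ('r \<Rightarrow> nat) \<Rightarrow> bool" where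
  "is_signature sig ar \<longleftrightarrow> finite sig \<and> (\<forall>R\<in>sig. ar R \<ge> 1)"

definition is_structure :: "'r set \<Rightarrow> ('r \<Rightarrow> nat) \<Rightarrow> ('r, 'a) struc \<Rightarrow> bool" where
  "is_structure sig ar S \<longleftrightarrow> is_signature sig ar \<and> finite (univ S) \<and>
     (\<forall>R\<in>sig. rels S R \<noteq> {} \<and>
        rels S R \<subseteq> {t. length t = ar R \<and> set t \<subseteq> univ S})"

type_synonym ('r, 'a) constr = "'r \<times> 'a list"
type_synonym 'r label = "nat set \<times> 'r"

text \<open>Constraint set C_S: formal symbols R(t) are pairs (R, t).\<close>
definition constraints :: "'r set \<Rightarrow> ('r, 'a) struc \<Rightarrow> ('r, 'a) constr set" where
  "constraints sig S = {(R, t). R \<in> sig \<and> t \<in> rels S R}"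

definition labels :: "'r set \<Rightarrow> ('r \<Rightarrow> nat) \<Rightarrow> 'r label set" where
  "labels sig ar = {(X, R). R \<in> sig \<and> X \<subseteq> {..<ar R}}"

text \<open>Entry M_S[a, R(t)] = (S, R) with S the set of positions of a in t.\<close>
definition Mlab :: "'a \<Rightarrow> ('r, 'a) constr \<Rightarrow> 'r label" where
  "Mlab a c = ({i. i < length (snd c) \<and> snd c ! i = a}, fst c)"

definition Mell :: "'r label \<Rightarrow> 'a \<Rightarrow> ('r, 'a) constr \<Rightarrow> real" where
  "Mell l a c = (if Mlab a c = l then 1 else 0)"

definition doubly_stochastic :: "'x set \<Rightarrow> 'y set \<Rightarrow> ('x \<Rightarrow> 'y \<Rightarrow> real) \<Rightarrow> bool" where
  "doubly_stochastic Rows Cols P \<longleftrightarrow>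
     (\<forall>r\<in>Rows. \<forall>c\<in>Cols. P r c \<ge> 0) \<and>
     (\<forall>r\<in>Rows. (\<Sum>c\<in>Cols. P r c) = 1) \<and>
     (\<forall>c\<in>Cols. (\<Sum>r\<in>Rows. P r c) = 1)"

definition frac_iso :: "'r set \<Rightarrow> ('r \<Rightarrow> nat) \<Rightarrow> ('r, 'a) struc \<Rightarrow> ('r, 'b) struc \<Rightarrow> bool" where
  "frac_iso sig ar A B \<longleftrightarrow>
    (\<exists>(P :: 'b \<Rightarrow> 'a \<Rightarrow> real) (Q :: ('r, 'b) constr \<Rightarrow> ('r, 'a) constr \<Rightarrow> real).
       doubly_stochastic (univ B) (univ A) P \<and>
       doubly_stochastic (constraints sig B) (constraints sig A) Q \<and>
       (\<forall>l\<in>labels sig ar.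
          (\<forall>b\<in>univ B. \<forall>c\<in>constraints sig A.
             (\<Sum>a\<in>univ A. P b a * Mell l a c) =
             (\<Sum>d\<in>constraints sig B. Mell l b d * Q d c)) \<and>
          (\<forall>a\<in>univ A. \<forall>d\<in>constraints sig B.
             (\<Sum>c\<in>constraints sig A. Mell l a c * Q d c) =
             (\<Sum>b\<in>univ B. P b a * Mell l b d))))"

text \<open>Iterated degrees on the factor graph with vertex set A + C_A.\<close>
datatype 'r deg = DElem | DConstr | DMulti "('r label \<times> 'r deg) multiset"

fun ideg :: "'r set \<Rightarrow> ('r, 'a) struc \<Rightarrow> nat \<Rightarrow> ('a + ('r, 'a) constr) \<Rightarrow> 'r deg" where
  "ideg sig S 0 (Inl a) = DElem"
| "ideg sig S 0 (Inr c) = DConstr"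
| "ideg sig S (Suc j) (Inl a) =
     DMulti (image_mset (\<lambda>c. (Mlab a c, ideg sig S j (Inr c)))
       (mset_set {c \<in> constraints sig S. a \<in> set (snd c)}))"
| "ideg sig S (Suc j) (Inr c) =
     DMulti (image_mset (\<lambda>a. (Mlab a c, ideg sig S j (Inl a)))
       (mset_set (set (snd c))))"

definition fg_vertices :: "'r set \<Rightarrow> ('r, 'a) struc \<Rightarrow> ('a + ('r, 'a) constr) set" where
  "fg_vertices sig S = Inl ` univ S \<union> Inr ` constraints sig S"

definition iterated_degree_sequence :: "'r set \<Rightarrow> ('r, 'a) struc \<Rightarrow> (nat \<Rightarrow> 'r deg) multiset" where
  "iterated_degree_sequence sig S =
     image_mset (\<lambda>v j. ideg sig S j v) (mset_set (fg_vertices sig S))"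

definition indexed_partition :: "'i set \<Rightarrow> ('i \<Rightarrow> 'x set) \<Rightarrow> 'x set \<Rightarrow> bool" where
  "indexed_partition I P X \<longleftrightarrow>
     (\<forall>i\<in>I. P i \<noteq> {}) \<and> (\<forall>i\<in>I. \<forall>j\<in>I. i \<noteq> j \<longrightarrow> P i \<inter> P j = {}) \<and>
     (\<Union>i\<in>I. P i) = X"

definition equitable_with ::
  "'r set \<Rightarrow> ('r \<Rightarrow> nat) \<Rightarrow> ('r, 'a) struc \<Rightarrow> nat set \<Rightarrow> nat set \<Rightarrow>
   (nat \<Rightarrow> 'a set) \<Rightarrow> (nat \<Rightarrow> ('r, 'a) constr set) \<Rightarrow>
   ('r label \<Rightarrow> nat \<Rightarrow> nat \<Rightarrow> nat) \<Rightarrow> ('r label \<Rightarrow> nat \<Rightarrow> nat \<Rightarrow> nat) \<Rightarrow> bool" where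
  "equitable_with sig ar S I J P Q c d \<longleftrightarrow>
     indexed_partition I P (univ S) \<and> indexed_partition J Q (constraints sig S) \<and>
     (\<forall>i\<in>I. \<forall>j\<in>J. \<forall>l\<in>labels sig ar.
        (\<forall>a\<in>P i. card {x \<in> Q j. Mlab a x = l} = c l i j) \<and>
        (\<forall>x\<in>Q j. card {a \<in> P i. Mlab a x = l} = d l j i))"

definition common_equitable_partition ::
  "'r set \<Rightarrow> ('r \<Rightarrow> nat) \<Rightarrow> ('r, 'a) struc \<Rightarrow> ('r, 'b) struc \<Rightarrow> bool" where
  "common_equitable_partition sig ar A B \<longleftrightarrow>
     (\<exists>I J PA QA PB QB c d.
        equitable_with sig ar A I J PA QA c d \<and>
        equitable_with sig ar B I J PB QB c d \<and>
        (\<forall>i\<in>I. card (PA i) = card (PB i)) \<and>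
        (\<forall>j\<in>J. card (QA j) = card (QB j)))"

definition is_graph :: "'r set \<Rightarrow> ('r \<Rightarrow> nat) \<Rightarrow> 'r \<Rightarrow> ('r, 'a) struc \<Rightarrow> bool" where
  "is_graph sig ar E S \<longleftrightarrow> sig = {E} \<and> ar E = 2 \<and>
     (\<forall>x y. [x, y] \<in> rels S E \<longrightarrow> [y, x] \<in> rels S E) \<and>
     (\<forall>x. [x, x] \<notin> rels S E)"

definition adj :: "'r \<Rightarrow> ('r, 'a) struc \<Rightarrow> 'a \<Rightarrow> 'a \<Rightarrow> real" where
  "adj E S x y = (if [x, y] \<in> rels S E then 1 else 0)"

definition frac_iso_graph :: "'r \<Rightarrow> ('r, 'a) struc \<Rightarrow> ('r, 'b) struc \<Rightarrow> bool" where
  "frac_iso_graph E A B \<longleftrightarrow>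
     (\<exists>P :: 'b \<Rightarrow> 'a \<Rightarrow> real. doubly_stochastic (univ B) (univ A) P \<and>
        (\<forall>b\<in>univ B. \<forall>a\<in>univ A.
           (\<Sum>a'\<in>univ A. P b a' * adj E A a' a) = (\<Sum>b'\<in>univ B. adj E B b b' * P b' a)))"

end

theory Submission
  imports Defs
begin

lemma ds_support:
  fixes P :: "'b \<Rightarrow> 'a \<Rightarrow> real"
  assumes fA: "finite A" and fB: "finite B" and ds: "doubly_stochastic B A P"
    and xy: "\<forall>b\<in>B. (\<Sum>a\<in>A. P b a * x a) = y b"
    and yx: "\<forall>a\<in>A. (\<Sum>b\<in>B. P b a * y b) = x a"
    and b: "b \<in> B" and a: "a \<in> A" and pos: "P b a > 0"
  shows "x a = y b"
proof -
  have nn: "\<forall>r\<in>B. \<forall>c\<in>A. P r c \<ge> 0" and rs: "\<forall>r\<in>B. (\<Sum>c\<in>A. P r c) = 1"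
    and cs: "\<forall>c\<in>A. (\<Sum>r\<in>B. P r c) = 1" using ds unfolding doubly_stochastic_def by auto
  have e1: "(\<Sum>b\<in>B. \<Sum>a\<in>A. P b a * (x a)^2) = (\<Sum>a\<in>A. (x a)^2)"
  proof -
    have "(\<Sum>b\<in>B. \<Sum>a\<in>A. P b a * (x a)^2) = (\<Sum>a\<in>A. \<Sum>b\<in>B. P b a * (x a)^2)"
      by (rule sum.swap)
    also have "\<dots> = (\<Sum>a\<in>A. (\<Sum>b\<in>B. P b a) * (x a)^2)" by (simp add: sum_distrib_right)
    also have "\<dots> = (\<Sum>a\<in>A. (x a)^2)" using cs by simp
    finally show ?thesis .
  qed
  have e2: "(\<Sum>b\<in>B. \<Sum>a\<in>A. P b a * (y b)^2) = (\<Sum>b\<in>B. (y b)^2)"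
  proof -
    have "(\<Sum>b\<in>B. \<Sum>a\<in>A. P b a * (y b)^2) = (\<Sum>b\<in>B. (\<Sum>a\<in>A. P b a) * (y b)^2)"
      by (simp add: sum_distrib_right)
    also have "\<dots> = (\<Sum>b\<in>B. (y b)^2)" using rs by simp
    finally show ?thesis .
  qed
  have e3: "(\<Sum>b\<in>B. \<Sum>a\<in>A. P b a * x a * y b) = (\<Sum>b\<in>B. (y b)^2)"
  proof -
    have "(\<Sum>b\<in>B. \<Sum>a\<in>A. P b a * x a * y b) = (\<Sum>b\<in>B. (\<Sum>a\<in>A. P b a * x a) * y b)"
      by (simp add: sum_distrib_right)
    also have "\<dots> = (\<Sum>b\<in>B. (y b)^2)" using xy by (simp add: power2_eq_square)
    finally show ?thesis .
  qed
  have e4: "(\<Sum>b\<in>B. \<Sum>a\<in>A. P b a * x a * y b) = (\<Sum>a\<in>A. (x a)^2)"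
  proof -
    have "(\<Sum>b\<in>B. \<Sum>a\<in>A. P b a * x a * y b) = (\<Sum>a\<in>A. \<Sum>b\<in>B. P b a * x a * y b)"
      by (rule sum.swap)
    also have "\<dots> = (\<Sum>a\<in>A. x a * (\<Sum>b\<in>B. P b a * y b))"
      by (simp add: sum_distrib_left mult_ac)
    also have "\<dots> = (\<Sum>a\<in>A. (x a)^2)" using yx by (simp add: power2_eq_square)
    finally show ?thesis .
  qed
  have "(\<Sum>b\<in>B. \<Sum>a\<in>A. P b a * (x a - y b)^2) =
     (\<Sum>b\<in>B. \<Sum>a\<in>A. P b a * (x a)^2) - 2 * (\<Sum>b\<in>B. \<Sum>a\<in>A. P b a * x a * y b)
       + (\<Sum>b\<in>B. \<Sum>a\<in>A. P b a * (y b)^2)"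
    by (simp add: power2_diff algebra_simps sum.distrib sum_subtractf sum_distrib_left)
  also have "\<dots> = 0" using e1 e2 e3 e4 by simp
  finally have z: "(\<Sum>b\<in>B. \<Sum>a\<in>A. P b a * (x a - y b)^2) = 0" .
  have nn2: "\<forall>b\<in>B. \<forall>a\<in>A. P b a * (x a - y b)^2 \<ge> 0" using nn by auto
  have "\<forall>b\<in>B. (\<Sum>a\<in>A. P b a * (x a - y b)^2) = 0"
    using z fB nn2 by (subst (asm) sum_nonneg_eq_0_iff) (auto intro: sum_nonneg)
  then have "(\<Sum>a\<in>A. P b a * (x a - y b)^2) = 0" using b by auto
  then have "P b a * (x a - y b)^2 = 0" using fA nn2 b a by (subst (asm) sum_nonneg_eq_0_iff) auto
  then show ?thesis using pos by simp
qed

lemma ds_const: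
  fixes Q :: "'d \<Rightarrow> 'c \<Rightarrow> real"
  assumes ds: "doubly_stochastic D C Q"
    and compat: "\<And>d c. d \<in> D \<Longrightarrow> c \<in> C \<Longrightarrow> Q d c > 0 \<Longrightarrow> f c = g d"
  shows "\<forall>d\<in>D. (\<Sum>c\<in>C. Q d c * f c) = g d" and "\<forall>c\<in>C. (\<Sum>d\<in>D. Q d c * g d) = f c"
proof -
  have nn: "\<forall>r\<in>D. \<forall>c\<in>C. Q r c \<ge> 0" and rs: "\<forall>r\<in>D. (\<Sum>c\<in>C. Q r c) = 1"
    and cs: "\<forall>c\<in>C. (\<Sum>r\<in>D. Q r c) = 1" using ds unfolding doubly_stochastic_def by auto
  show "\<forall>d\<in>D. (\<Sum>c\<in>C. Q d c * f c) = g d"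
  proof
    fix d assume d: "d \<in> D"
    have "(\<Sum>c\<in>C. Q d c * f c) = (\<Sum>c\<in>C. Q d c * g d)"
    proof (rule sum.cong)
      fix c assume c: "c \<in> C"
      show "Q d c * f c = Q d c * g d"
      proof (cases "Q d c > 0")
        case True then show ?thesis using compat[OF d c] by simp
      next
        case False then have "Q d c = 0" using nn d c by force
        then show ?thesis by simp
      qed
    qed simp
    also have "\<dots> = g d" using rs d by (simp add: sum_distrib_right[symmetric])
    finally show "(\<Sum>c\<in>C. Q d c * f c) = g d" .
  qed
  show "\<forall>c\<in>C. (\<Sum>d\<in>D. Q d c * g d) = f c"
  proof
    fix c assume c: "c \<in> C"
    have "(\<Sum>d\<in>D. Q d c * g d) = (\<Sum>d\<in>D. Q d c * f c)"
    proof (rule sum.cong)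
      fix d assume d: "d \<in> D"
      show "Q d c * g d = Q d c * f c"
      proof (cases "Q d c > 0")
        case True then show ?thesis using compat[OF d c] by simp
      next
        case False then have "Q d c = 0" using nn d c by force
        then show ?thesis by simp
      qed
    qed simp
    also have "\<dots> = f c" using cs c by (simp add: sum_distrib_right[symmetric])
    finally show "(\<Sum>d\<in>D. Q d c * g d) = f c" .
  qed
qed

lemma step_abs:
  fixes P :: "'b \<Rightarrow> 'a \<Rightarrow> real" and Q :: "'d \<Rightarrow> 'c \<Rightarrow> real"
  assumes fA: "finite A" and fB: "finite B" and fC: "finite C" and fD: "finite D"
    and dsP: "doubly_stochastic B A P" and dsQ: "doubly_stochastic D C Q"
    and e1: "\<forall>b\<in>B. \<forall>c\<in>C. (\<Sum>a\<in>A. P b a * M a c) = (\<Sum>d\<in>D. N b d * Q d c)"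
    and e2: "\<forall>a\<in>A. \<forall>d\<in>D. (\<Sum>c\<in>C. M a c * Q d c) = (\<Sum>b\<in>B. P b a * N b d)"
    and compat: "\<And>d c. d \<in> D \<Longrightarrow> c \<in> C \<Longrightarrow> Q d c > 0 \<Longrightarrow> z c = w d"
    and b: "b \<in> B" and a: "a \<in> A" and pos: "P b a > 0"
  shows "(\<Sum>c\<in>C. M a c * z c) = (\<Sum>d\<in>D. N b d * w d)"
proof -
  note qc = ds_const[where f=z and g=w, OF dsQ compat]
  show ?thesis
  proof (rule ds_support[OF fA fB dsP _ _ b a pos, where x = "\<lambda>a. \<Sum>c\<in>C. M a c * z c"
        and y = "\<lambda>b. \<Sum>d\<in>D. N b d * w d"])
    show "\<forall>b\<in>B. (\<Sum>a\<in>A. P b a * (\<Sum>c\<in>C. M a c * z c)) = (\<Sum>d\<in>D. N b d * w d)"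
    proof
      fix b assume b: "b \<in> B"
      have "(\<Sum>a\<in>A. P b a * (\<Sum>c\<in>C. M a c * z c)) = (\<Sum>c\<in>C. (\<Sum>a\<in>A. P b a * M a c) * z c)"
        by (simp add: sum_distrib_left sum_distrib_right mult_ac sum.swap[of _ A])
      also have "\<dots> = (\<Sum>c\<in>C. (\<Sum>d\<in>D. N b d * Q d c) * z c)" using e1 b by simp
      also have "\<dots> = (\<Sum>d\<in>D. N b d * (\<Sum>c\<in>C. Q d c * z c))"
        by (simp add: sum_distrib_left sum_distrib_right mult_ac sum.swap[of _ C])
      also have "\<dots> = (\<Sum>d\<in>D. N b d * w d)" using qc(1) by simp
      finally show "(\<Sum>a\<in>A. P b a * (\<Sum>c\<in>C. M a c * z c)) = (\<Sum>d\<in>D. N b d * w d)" .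
    qed
    show "\<forall>a\<in>A. (\<Sum>b\<in>B. P b a * (\<Sum>d\<in>D. N b d * w d)) = (\<Sum>c\<in>C. M a c * z c)"
    proof
      fix a assume a: "a \<in> A"
      have "(\<Sum>b\<in>B. P b a * (\<Sum>d\<in>D. N b d * w d)) = (\<Sum>d\<in>D. (\<Sum>b\<in>B. P b a * N b d) * w d)"
        by (simp add: sum_distrib_left sum_distrib_right mult_ac sum.swap[of _ B])
      also have "\<dots> = (\<Sum>d\<in>D. (\<Sum>c\<in>C. M a c * Q d c) * w d)" using e2 a by simp
      also have "\<dots> = (\<Sum>c\<in>C. M a c * (\<Sum>d\<in>D. Q d c * w d))"
        by (simp add: sum_distrib_left sum_distrib_right mult_ac sum.swap[of _ D])
      also have "\<dots> = (\<Sum>c\<in>C. M a c * z c)" using qc(2) by simp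
      finally show "(\<Sum>b\<in>B. P b a * (\<Sum>d\<in>D. N b d * w d)) = (\<Sum>c\<in>C. M a c * z c)" .
    qed
  qed
qed

lemma finite_constraints:
  assumes "is_structure sig ar S" shows "finite (constraints sig S)"
proof -
  have fs: "finite sig" using assms unfolding is_structure_def is_signature_def by auto
  have "\<forall>R\<in>sig. finite (rels S R)"
  proof
    fix R assume R: "R \<in> sig"
    have "rels S R \<subseteq> {t. set t \<subseteq> univ S \<and> length t = ar R}"
      using assms R unfolding is_structure_def by auto
    moreover have "finite {t. set t \<subseteq> univ S \<and> length t = ar R}"
      using assms by (intro finite_lists_length_eq) (auto simp: is_structure_def)
    ultimately show "finite (rels S R)" by (rule finite_subset)
  qed
  then have "finite (Sigma sig (rels S))" using fs by (rule_tac finite_SigmaI) auto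
  moreover have "constraints sig S = Sigma sig (rels S)" unfolding constraints_def by auto
  ultimately show ?thesis by simp
qed

lemma finite_univ: "is_structure sig ar S \<Longrightarrow> finite (univ S)"
  unfolding is_structure_def by auto

lemma constraint_props:
  assumes "is_structure sig ar S" "c \<in> constraints sig S"
  shows "fst c \<in> sig" "snd c \<in> rels S (fst c)" "length (snd c) = ar (fst c)"
    "set (snd c) \<subseteq> univ S" "ar (fst c) \<ge> 1" "set (snd c) \<noteq> {}"
proof -
  show 1: "fst c \<in> sig" and 2: "snd c \<in> rels S (fst c)"
    using assms(2) unfolding constraints_def by auto
  have "rels S (fst c) \<subseteq> {t. length t = ar (fst c) \<and> set t \<subseteq> univ S}"
    using assms(1) 1 unfolding is_structure_def by auto
  then show 3: "length (snd c) = ar (fst c)" and "set (snd c) \<subseteq> univ S" using 2 by auto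
  show 5: "ar (fst c) \<ge> 1" using assms(1) 1 unfolding is_structure_def is_signature_def by auto
  show "set (snd c) \<noteq> {}" using 3 5 by auto
qed

lemma Mlab_labels:
  assumes "is_structure sig ar S" "c \<in> constraints sig S"
  shows "Mlab a c \<in> labels sig ar"
  using constraint_props[OF assms] unfolding Mlab_def labels_def by auto

lemma Mlab_mem: "Mlab a c = l \<Longrightarrow> fst l \<noteq> {} \<Longrightarrow> a \<in> set (snd c)"
  unfolding Mlab_def by (auto simp: in_set_conv_nth)

lemma Mlab_mem2: "a \<in> set (snd c) \<Longrightarrow> fst (Mlab a c) \<noteq> {}"
  unfolding Mlab_def by (auto simp: in_set_conv_nth)

lemma Mlab_snd[simp]: "snd (Mlab a c) = fst c"
  unfolding Mlab_def by simp

lemma count_image_mset_set: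
  assumes "finite X" shows "count (image_mset g (mset_set X)) y = card {x \<in> X. g x = y}"
proof -
  have "count (image_mset g (mset_set X)) y = sum (count (mset_set X)) (g -` {y} \<inter> X)"
    using assms by (simp add: count_image_mset)
  also have "\<dots> = sum (\<lambda>_. 1) (g -` {y} \<inter> X)" using assms by (intro sum.cong) auto
  also have "\<dots> = card {x \<in> X. g x = y}" by (simp add: Int_def conj_commute)
  finally show ?thesis .
qed

lemma card_eq_sum_indicator:
  assumes "finite X" shows "real (card {x \<in> X. p x}) = (\<Sum>x\<in>X. (if p x then 1 else 0))"
  using assms by (simp add: sum.If_cases Int_def)

lemma card_filter_real:
  assumes "finite X"
  shows "real (card {x \<in> X. f x = l \<and> p x}) = (\<Sum>x\<in>X. (if f x = l then 1 else 0) * (if p x then 1 else 0))"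
proof -
  have "real (card {x \<in> X. f x = l \<and> p x}) = (\<Sum>x\<in>X. (if f x = l \<and> p x then 1 else 0))"
    using card_eq_sum_indicator[OF assms] by simp
  also have "\<dots> = (\<Sum>x\<in>X. (if f x = l then 1 else 0) * (if p x then 1 else 0))"
    by (intro sum.cong) auto
  finally show ?thesis .
qed

lemma ideg_Suc_Inl:
  "ideg sig S (Suc k) (Inl a) = DMulti (image_mset (\<lambda>c. (Mlab a c, ideg sig S k (Inr c)))
       (mset_set {c \<in> constraints sig S. a \<in> set (snd c)}))" by simp

lemma count_el:
  assumes sS: "is_structure sig ar S"
  shows "count (image_mset (\<lambda>c. (Mlab a c, ideg sig S k (Inr c)))
       (mset_set {c \<in> constraints sig S. a \<in> set (snd c)})) (l, t) =
     (if fst l = {} then 0 else card {c \<in> constraints sig S. Mlab a c = l \<and> ideg sig S k (Inr c) = t})"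
proof -
  have f: "finite {c \<in> constraints sig S. a \<in> set (snd c)}" using finite_constraints[OF sS] by simp
  have "{c \<in> {c \<in> constraints sig S. a \<in> set (snd c)}. (Mlab a c, ideg sig S k (Inr c)) = (l, t)} =
     (if fst l = {} then {} else {c \<in> constraints sig S. Mlab a c = l \<and> ideg sig S k (Inr c) = t})"
  proof (cases "fst l = {}")
    case True then show ?thesis using Mlab_mem2[of a] by fastforce
  next
    case False then show ?thesis using Mlab_mem[of a _ l] by auto
  qed
  then show ?thesis unfolding count_image_mset_set[OF f] by simp
qed

lemma count_con:
  assumes sS: "is_structure sig ar S" and c: "c \<in> constraints sig S"
  shows "count (image_mset (\<lambda>a. (Mlab a c, ideg sig S k (Inl a))) (mset_set (set (snd c)))) (l, t) =
     (if fst l = {} then 0 else card {a \<in> univ S. Mlab a c = l \<and> ideg sig S k (Inl a) = t})"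
proof -
  have sub: "set (snd c) \<subseteq> univ S" using constraint_props[OF sS c] by simp
  have "{a \<in> set (snd c). (Mlab a c, ideg sig S k (Inl a)) = (l, t)} =
     (if fst l = {} then {} else {a \<in> univ S. Mlab a c = l \<and> ideg sig S k (Inl a) = t})"
  proof (cases "fst l = {}")
    case True then show ?thesis using Mlab_mem2[of _ c] by fastforce
  next
    case False then show ?thesis using Mlab_mem[of _ c l] sub by auto
  qed
  then show ?thesis unfolding count_image_mset_set[OF finite_set] by simp
qed

lemma card_not_label:
  assumes sS: "is_structure sig ar S" and l: "l \<notin> labels sig ar"
  shows "{c \<in> constraints sig S. Mlab a c = l \<and> p c} = {}"
    "c \<in> constraints sig S \<Longrightarrow> {a \<in> univ S. Mlab a c = l \<and> q a} = {}"
proof -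
  show "{c \<in> constraints sig S. Mlab a c = l \<and> p c} = {}" using Mlab_labels[OF sS, of _ a] l by blast
  show "c \<in> constraints sig S \<Longrightarrow> {a \<in> univ S. Mlab a c = l \<and> q a} = {}"
    using Mlab_labels[OF sS, of c] l by blast
qed

lemma frac_iso_ideg:
  fixes P :: "'b \<Rightarrow> 'a \<Rightarrow> real" and Q :: "('r, 'b) constr \<Rightarrow> ('r, 'a) constr \<Rightarrow> real"
  assumes sA: "is_structure sig ar A" and sB: "is_structure sig ar B"
    and dsP: "doubly_stochastic (univ B) (univ A) P"
    and dsQ: "doubly_stochastic (constraints sig B) (constraints sig A) Q"
    and eqs: "\<forall>l\<in>labels sig ar.
          (\<forall>b\<in>univ B. \<forall>c\<in>constraints sig A.
             (\<Sum>a\<in>univ A. P b a * Mell l a c) =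
             (\<Sum>d\<in>constraints sig B. Mell l b d * Q d c)) \<and>
          (\<forall>a\<in>univ A. \<forall>d\<in>constraints sig B.
             (\<Sum>c\<in>constraints sig A. Mell l a c * Q d c) =
             (\<Sum>b\<in>univ B. P b a * Mell l b d))"
  shows "(\<forall>b\<in>univ B. \<forall>a\<in>univ A. P b a > 0 \<longrightarrow> ideg sig A k (Inl a) = ideg sig B k (Inl b)) \<and>
         (\<forall>d\<in>constraints sig B. \<forall>c\<in>constraints sig A. Q d c > 0 \<longrightarrow>
              ideg sig A k (Inr c) = ideg sig B k (Inr d))"
proof (induction k)
  case 0
  then show ?case by simp
next
  case (Suc k)
  note fA = finite_univ[OF sA] and fB = finite_univ[OF sB]
    and fCA = finite_constraints[OF sA] and fCB = finite_constraints[OF sB]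
  have IHc: "\<And>d c. d \<in> constraints sig B \<Longrightarrow> c \<in> constraints sig A \<Longrightarrow> Q d c > 0 \<Longrightarrow>
      (if ideg sig A k (Inr c) = t then 1 else 0) = (if ideg sig B k (Inr d) = t then (1::real) else 0)" for t
    using Suc.IH by auto
  have IHe: "\<And>b a. b \<in> univ B \<Longrightarrow> a \<in> univ A \<Longrightarrow> P b a > 0 \<Longrightarrow>
      (if ideg sig A k (Inl a) = t then 1 else 0) = (if ideg sig B k (Inl b) = t then (1::real) else 0)" for t
    using Suc.IH by auto
  have part1: "ideg sig A (Suc k) (Inl a) = ideg sig B (Suc k) (Inl b)"
    if b: "b \<in> univ B" and a: "a \<in> univ A" and pos: "P b a > 0" for a b
  proof -
    have "count (image_mset (\<lambda>c. (Mlab a c, ideg sig A k (Inr c)))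
       (mset_set {c \<in> constraints sig A. a \<in> set (snd c)})) (l, t) =
       count (image_mset (\<lambda>c. (Mlab b c, ideg sig B k (Inr c)))
       (mset_set {c \<in> constraints sig B. b \<in> set (snd c)})) (l, t)" for l t
    proof (cases "fst l = {} \<or> l \<notin> labels sig ar")
      case True
      then show ?thesis
      proof
        assume "fst l = {}" then show ?thesis unfolding count_el[OF sA] count_el[OF sB] by simp
      next
        assume l: "l \<notin> labels sig ar"
        show ?thesis unfolding count_el[OF sA] count_el[OF sB]
          card_not_label(1)[OF sA l, of a "\<lambda>c. ideg sig A k (Inr c) = t"]
            card_not_label(1)[OF sB l, of b "\<lambda>c. ideg sig B k (Inr c) = t"] by simp
      qed
    next
      case False
      then have l: "l \<in> labels sig ar" "fst l \<noteq> {}" by auto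
      have "(\<Sum>c\<in>constraints sig A. Mell l a c * (if ideg sig A k (Inr c) = t then 1 else 0)) =
            (\<Sum>d\<in>constraints sig B. Mell l b d * (if ideg sig B k (Inr d) = t then 1 else 0))"
        by (rule step_abs[OF fA fB fCA fCB dsP dsQ _ _ IHc b a pos]) (use eqs l in auto)
      then have "real (card {c \<in> constraints sig A. Mlab a c = l \<and> ideg sig A k (Inr c) = t}) =
                 real (card {c \<in> constraints sig B. Mlab b c = l \<and> ideg sig B k (Inr c) = t})"
        unfolding card_filter_real[OF fCA] card_filter_real[OF fCB] Mell_def by simp
      then show ?thesis unfolding count_el[OF sA] count_el[OF sB] using l by simp
    qed
    then show ?thesis unfolding ideg_Suc_Inl by (auto intro: multiset_eqI)
  qed
  have part2: "ideg sig A (Suc k) (Inr c) = ideg sig B (Suc k) (Inr d)"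
    if d: "d \<in> constraints sig B" and c: "c \<in> constraints sig A" and pos: "Q d c > 0" for c d
  proof -
    have "count (image_mset (\<lambda>a. (Mlab a c, ideg sig A k (Inl a))) (mset_set (set (snd c)))) (l, t) =
          count (image_mset (\<lambda>a. (Mlab a d, ideg sig B k (Inl a))) (mset_set (set (snd d)))) (l, t)"
      for l t
    proof (cases "fst l = {} \<or> l \<notin> labels sig ar")
      case True
      then show ?thesis
      proof
        assume "fst l = {}" then show ?thesis unfolding count_con[OF sA c] count_con[OF sB d] by simp
      next
        assume l: "l \<notin> labels sig ar"
        show ?thesis unfolding count_con[OF sA c] count_con[OF sB d]
          card_not_label(2)[OF sA l c, of "\<lambda>a. ideg sig A k (Inl a) = t"]
            card_not_label(2)[OF sB l d, of "\<lambda>a. ideg sig B k (Inl a) = t"] by simp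
      qed
    next
      case False
      then have l: "l \<in> labels sig ar" "fst l \<noteq> {}" by auto
      have "(\<Sum>a\<in>univ A. Mell l a c * (if ideg sig A k (Inl a) = t then 1 else 0)) =
            (\<Sum>b\<in>univ B. Mell l b d * (if ideg sig B k (Inl b) = t then 1 else 0))"
        by (rule step_abs[OF fCA fCB fA fB dsQ dsP _ _ IHe d c pos,
              where M = "\<lambda>c a. Mell l a c" and N = "\<lambda>d b. Mell l b d"])
           (use eqs l in \<open>auto simp: mult.commute\<close>)
      then have "real (card {a \<in> univ A. Mlab a c = l \<and> ideg sig A k (Inl a) = t}) =
                 real (card {a \<in> univ B. Mlab a d = l \<and> ideg sig B k (Inl a) = t})"
        unfolding card_filter_real[OF fA] card_filter_real[OF fB] Mell_def by simp
      then show ?thesis unfolding count_con[OF sA c] count_con[OF sB d] using l by simp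
    qed
    then show ?thesis by (auto intro: multiset_eqI)
  qed
  show ?case using part1 part2 by blast
qed

lemma ds_card:
  fixes P :: "'b \<Rightarrow> 'a \<Rightarrow> real"
  assumes fA: "finite A" and fB: "finite B" and ds: "doubly_stochastic B A P"
    and compat: "\<And>b a. b \<in> B \<Longrightarrow> a \<in> A \<Longrightarrow> P b a > 0 \<Longrightarrow> f a = g b"
  shows "card {a \<in> A. f a = T} = card {b \<in> B. g b = T}"
proof -
  let ?z = "\<lambda>a. if f a = T then 1 else (0::real)" and ?w = "\<lambda>b. if g b = T then 1 else (0::real)"
  have c: "\<And>b a. b \<in> B \<Longrightarrow> a \<in> A \<Longrightarrow> P b a > 0 \<Longrightarrow> ?z a = ?w b" using compat by simp
  note q = ds_const[where f = ?z and g = ?w, OF ds c]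
  have cs: "\<forall>c\<in>A. (\<Sum>r\<in>B. P r c) = 1" using ds unfolding doubly_stochastic_def by auto
  have "(\<Sum>b\<in>B. ?w b) = (\<Sum>b\<in>B. \<Sum>a\<in>A. P b a * ?z a)" using q(1) by simp
  also have "\<dots> = (\<Sum>a\<in>A. (\<Sum>b\<in>B. P b a) * ?z a)"
    by (simp add: sum.swap[of _ B] sum_distrib_right)
  also have "\<dots> = (\<Sum>a\<in>A. ?z a)" using cs by simp
  finally have "(\<Sum>a\<in>A. ?z a) = (\<Sum>b\<in>B. ?w b)" by simp
  then have "real (card {a \<in> A. f a = T}) = real (card {b \<in> B. g b = T})"
    using card_eq_sum_indicator[OF fA, of "\<lambda>a. f a = T"] card_eq_sum_indicator[OF fB, of "\<lambda>b. g b = T"]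
    by simp
  then show ?thesis by simp
qed

lemma count_ids:
  assumes sS: "is_structure sig ar S"
  shows "count (iterated_degree_sequence sig S) T =
    card {a \<in> univ S. (\<lambda>j. ideg sig S j (Inl a)) = T} +
    card {c \<in> constraints sig S. (\<lambda>j. ideg sig S j (Inr c)) = T}"
proof -
  let ?F = "\<lambda>v j. ideg sig S j v"
  have fU: "finite (univ S)" and fC: "finite (constraints sig S)"
    using finite_univ[OF sS] finite_constraints[OF sS] .
  have fv: "finite (fg_vertices sig S)" unfolding fg_vertices_def using fU fC by simp
  have "{v \<in> fg_vertices sig S. ?F v = T} =
      Inl ` {a \<in> univ S. ?F (Inl a) = T} \<union> Inr ` {c \<in> constraints sig S. ?F (Inr c) = T}"
    unfolding fg_vertices_def by auto
  moreover have "card (Inl ` {a \<in> univ S. ?F (Inl a) = T} \<union> Inr ` {c \<in> constraints sig S. ?F (Inr c) = T}) =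
      card {a \<in> univ S. ?F (Inl a) = T} + card {c \<in> constraints sig S. ?F (Inr c) = T}"
    using card_Plus[of "{a \<in> univ S. ?F (Inl a) = T}" "{c \<in> constraints sig S. ?F (Inr c) = T}"] fU fC
    by (simp add: Plus_def)
  ultimately have "card {v \<in> fg_vertices sig S. ?F v = T} =
      card {a \<in> univ S. ?F (Inl a) = T} + card {c \<in> constraints sig S. ?F (Inr c) = T}" by simp
  then show ?thesis unfolding iterated_degree_sequence_def count_image_mset_set[OF fv] .
qed

lemma frac_iso_imp_ids:
  assumes sA: "is_structure sig ar A" and sB: "is_structure sig ar B"
    and fi: "frac_iso sig ar A B"
  shows "iterated_degree_sequence sig A = iterated_degree_sequence sig B"
proof -
  obtain P Q where dsP: "doubly_stochastic (univ B) (univ A) P"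
    and dsQ: "doubly_stochastic (constraints sig B) (constraints sig A) Q"
    and eqs: "\<forall>l\<in>labels sig ar.
          (\<forall>b\<in>univ B. \<forall>c\<in>constraints sig A.
             (\<Sum>a\<in>univ A. P b a * Mell l a c) =
             (\<Sum>d\<in>constraints sig B. Mell l b d * Q d c)) \<and>
          (\<forall>a\<in>univ A. \<forall>d\<in>constraints sig B.
             (\<Sum>c\<in>constraints sig A. Mell l a c * Q d c) =
             (\<Sum>b\<in>univ B. P b a * Mell l b d))"
    using fi unfolding frac_iso_def by blast
  note I = frac_iso_ideg[OF sA sB dsP dsQ eqs]
  have c1: "(\<lambda>j. ideg sig A j (Inl a)) = (\<lambda>j. ideg sig B j (Inl b))"
    if "b \<in> univ B" "a \<in> univ A" "P b a > 0" for a b using I that by blast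
  have c2: "(\<lambda>j. ideg sig A j (Inr c)) = (\<lambda>j. ideg sig B j (Inr d))"
    if "d \<in> constraints sig B" "c \<in> constraints sig A" "Q d c > 0" for c d using I that by blast
  show ?thesis
  proof (rule multiset_eqI)
    fix T
    show "count (iterated_degree_sequence sig A) T = count (iterated_degree_sequence sig B) T"
      unfolding count_ids[OF sA] count_ids[OF sB]
      using ds_card[OF finite_univ[OF sA] finite_univ[OF sB] dsP c1, where T=T]
        ds_card[OF finite_constraints[OF sA] finite_constraints[OF sB] dsQ c2, where T=T] by simp
  qed
qed

definition pidx :: "'i set \<Rightarrow> ('i \<Rightarrow> 'x set) \<Rightarrow> 'x \<Rightarrow> 'i" where
  "pidx I P x = (THE i. i \<in> I \<and> x \<in> P i)"

lemma pidx:
  assumes ip: "indexed_partition I P X" and x: "x \<in> X"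
  shows "pidx I P x \<in> I" "x \<in> P (pidx I P x)"
proof -
  have ex: "\<exists>i. i \<in> I \<and> x \<in> P i" using ip x unfolding indexed_partition_def by auto
  have un: "i = j" if "i \<in> I" "x \<in> P i" "j \<in> I" "x \<in> P j" for i j
    using ip that unfolding indexed_partition_def by blast
  have "pidx I P x \<in> I \<and> x \<in> P (pidx I P x)"
    unfolding pidx_def by (rule theI') (use ex un in blast)
  then show "pidx I P x \<in> I" "x \<in> P (pidx I P x)" by auto
qed

lemma pidx_eq:
  assumes ip: "indexed_partition I P X" and i: "i \<in> I" and x: "x \<in> P i"
  shows "pidx I P x = i"
proof -
  have xX: "x \<in> X" using ip i x unfolding indexed_partition_def by auto
  have un: "i = j" if "i \<in> I" "x \<in> P i" "j \<in> I" "x \<in> P j" for i j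
    using ip that unfolding indexed_partition_def by blast
  show ?thesis using pidx[OF ip xX] un i x by blast
qed

lemma pidx_block:
  assumes ip: "indexed_partition I P X" and i: "i \<in> I"
  shows "{x \<in> X. pidx I P x = i} = P i"
proof -
  have "P i \<subseteq> X" using ip i unfolding indexed_partition_def by auto
  then show ?thesis using pidx[OF ip] pidx_eq[OF ip i] by auto
qed

lemma block_props:
  assumes ip: "indexed_partition I P X" and fX: "finite X" and i: "i \<in> I"
  shows "finite (P i)" "card (P i) > 0" "P i \<subseteq> X"
proof -
  show s: "P i \<subseteq> X" using ip i unfolding indexed_partition_def by auto
  show f: "finite (P i)" using finite_subset[OF s fX] .
  have "P i \<noteq> {}" using ip i unfolding indexed_partition_def by auto
  then show "card (P i) > 0" using f by (simp add: card_gt_0_iff)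
qed

lemma sum_block:
  assumes fX: "finite X" and Y: "{x \<in> X. f x = i} = Y"
  shows "(\<Sum>x\<in>X. (if f x = i then k else 0) * (if p x then 1 else 0)) = k * real (card {y \<in> Y. p y})"
proof -
  have "(\<Sum>x\<in>X. (if f x = i then k else 0) * (if p x then 1 else 0)) =
        (\<Sum>x\<in>X. k * (if f x = i \<and> p x then 1 else 0))" by (intro sum.cong) auto
  also have "\<dots> = k * real (card {x \<in> X. f x = i \<and> p x})"
    using card_eq_sum_indicator[OF fX, of "\<lambda>x. f x = i \<and> p x"] by (simp add: sum_distrib_left)
  also have "{x \<in> X. f x = i \<and> p x} = {y \<in> Y. p y}" using Y by auto
  finally show ?thesis .
qed

lemma double_count:
  assumes fX: "finite X" and fY: "finite Y"
    and m: "\<forall>x\<in>X. card {y \<in> Y. R x y} = m" and n: "\<forall>y\<in>Y. card {x \<in> X. R x y} = n"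
  shows "card X * m = card Y * n"
proof -
  have "real (card X * m) = (\<Sum>x\<in>X. real (card {y \<in> Y. R x y}))" using m by simp
  also have "\<dots> = (\<Sum>x\<in>X. \<Sum>y\<in>Y. (if R x y then 1 else 0))"
    using card_eq_sum_indicator[OF fY] by simp
  also have "\<dots> = (\<Sum>y\<in>Y. \<Sum>x\<in>X. (if R x y then 1 else 0))" by (rule sum.swap)
  also have "\<dots> = (\<Sum>y\<in>Y. real (card {x \<in> X. R x y}))"
    using card_eq_sum_indicator[OF fX] by simp
  also have "\<dots> = real (card Y * n)" using n by simp
  finally show ?thesis by linarith
qed

lemma equitable_identity:
  assumes eq: "equitable_with sig ar S I J P Q c d" and sS: "is_structure sig ar S"
    and i: "i \<in> I" and j: "j \<in> J" and l: "l \<in> labels sig ar"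
  shows "real (d l j i) / real (card (P i)) = real (c l i j) / real (card (Q j))"
proof -
  have ipP: "indexed_partition I P (univ S)" and ipQ: "indexed_partition J Q (constraints sig S)"
    using eq unfolding equitable_with_def by auto
  note bP = block_props[OF ipP finite_univ[OF sS] i] and bQ = block_props[OF ipQ finite_constraints[OF sS] j]
  have cc: "\<forall>a\<in>P i. card {x \<in> Q j. Mlab a x = l} = c l i j"
    and dd: "\<forall>x\<in>Q j. card {a \<in> P i. Mlab a x = l} = d l j i"
    using eq i j l unfolding equitable_with_def by auto
  have "card (P i) * c l i j = card (Q j) * d l j i"
    by (rule double_count[OF bP(1) bQ(1) cc dd])
  then have "real (card (P i)) * real (c l i j) = real (card (Q j)) * real (d l j i)"
    by (metis of_nat_mult)
  then show ?thesis using bP(2) bQ(2) by (simp add: field_simps)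
qed

lemma cep_imp_frac_iso:
  assumes sA: "is_structure sig ar A" and sB: "is_structure sig ar B"
    and cep: "common_equitable_partition sig ar A B"
  shows "frac_iso sig ar A B"
proof -
  obtain I J PA QA PB QB c d where eA: "equitable_with sig ar A I J PA QA c d"
    and eB: "equitable_with sig ar B I J PB QB c d"
    and cP: "\<forall>i\<in>I. card (PA i) = card (PB i)" and cQ: "\<forall>j\<in>J. card (QA j) = card (QB j)"
    using cep unfolding common_equitable_partition_def by blast
  have ipA: "indexed_partition I PA (univ A)" and iqA: "indexed_partition J QA (constraints sig A)"
    and ipB: "indexed_partition I PB (univ B)" and iqB: "indexed_partition J QB (constraints sig B)"
    using eA eB unfolding equitable_with_def by auto
  note fA = finite_univ[OF sA] and fB = finite_univ[OF sB]
    and fCA = finite_constraints[OF sA] and fCB = finite_constraints[OF sB]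
  define iA where "iA = pidx I PA" define iB where "iB = pidx I PB"
  define jA where "jA = pidx J QA" define jB where "jB = pidx J QB"
  define P where "P = (\<lambda>b a. if iA a = iB b then 1 / real (card (PA (iA a))) else 0)"
  define Q where "Q = (\<lambda>dd cc. if jA cc = jB dd then 1 / real (card (QA (jA cc))) else 0)"
  have dsP: "doubly_stochastic (univ B) (univ A) P"
    unfolding doubly_stochastic_def
  proof (intro conjI ballI)
    fix b a show "0 \<le> P b a" unfolding P_def by simp
  next
    fix b assume b: "b \<in> univ B"
    let ?i = "iB b"
    have i: "?i \<in> I" using pidx(1)[OF ipB b] unfolding iB_def .
    have "(\<Sum>a\<in>univ A. P b a) = (\<Sum>a\<in>univ A. (if iA a = ?i then 1 / real (card (PA ?i)) else 0) * (if True then 1 else 0))"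
      unfolding P_def by (intro sum.cong) auto
    also have "\<dots> = 1 / real (card (PA ?i)) * real (card {y \<in> PA ?i. True})"
      by (rule sum_block[OF fA]) (simp add: iA_def pidx_block[OF ipA i])
    also have "\<dots> = 1" using block_props(2)[OF ipA fA i] by simp
    finally show "(\<Sum>a\<in>univ A. P b a) = 1" .
  next
    fix a assume a: "a \<in> univ A"
    let ?i = "iA a"
    have i: "?i \<in> I" using pidx(1)[OF ipA a] unfolding iA_def .
    have "(\<Sum>b\<in>univ B. P b a) = (\<Sum>b\<in>univ B. (if iB b = ?i then 1 / real (card (PA ?i)) else 0) * (if True then 1 else 0))"
      unfolding P_def by (intro sum.cong) auto
    also have "\<dots> = 1 / real (card (PA ?i)) * real (card {y \<in> PB ?i. True})"
      by (rule sum_block[OF fB]) (simp add: iB_def pidx_block[OF ipB i])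
    also have "\<dots> = 1" using block_props(2)[OF ipA fA i] cP i by simp
    finally show "(\<Sum>b\<in>univ B. P b a) = 1" .
  qed
  have dsQ: "doubly_stochastic (constraints sig B) (constraints sig A) Q"
    unfolding doubly_stochastic_def
  proof (intro conjI ballI)
    fix b a show "0 \<le> Q b a" unfolding Q_def by simp
  next
    fix b assume b: "b \<in> constraints sig B"
    let ?i = "jB b"
    have i: "?i \<in> J" using pidx(1)[OF iqB b] unfolding jB_def .
    have "(\<Sum>a\<in>constraints sig A. Q b a) = (\<Sum>a\<in>constraints sig A. (if jA a = ?i then 1 / real (card (QA ?i)) else 0) * (if True then 1 else 0))"
      unfolding Q_def by (intro sum.cong) auto
    also have "\<dots> = 1 / real (card (QA ?i)) * real (card {y \<in> QA ?i. True})"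
      by (rule sum_block[OF fCA]) (simp add: jA_def pidx_block[OF iqA i])
    also have "\<dots> = 1" using block_props(2)[OF iqA fCA i] by simp
    finally show "(\<Sum>a\<in>constraints sig A. Q b a) = 1" .
  next
    fix a assume a: "a \<in> constraints sig A"
    let ?i = "jA a"
    have i: "?i \<in> J" using pidx(1)[OF iqA a] unfolding jA_def .
    have "(\<Sum>b\<in>constraints sig B. Q b a) = (\<Sum>b\<in>constraints sig B. (if jB b = ?i then 1 / real (card (QA ?i)) else 0) * (if True then 1 else 0))"
      unfolding Q_def by (intro sum.cong) auto
    also have "\<dots> = 1 / real (card (QA ?i)) * real (card {y \<in> QB ?i. True})"
      by (rule sum_block[OF fCB]) (simp add: jB_def pidx_block[OF iqB i])
    also have "\<dots> = 1" using block_props(2)[OF iqA fCA i] cQ i by simp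
    finally show "(\<Sum>b\<in>constraints sig B. Q b a) = 1" .
  qed
  have eq1: "(\<Sum>a\<in>univ A. P b a * Mell l a cc) = (\<Sum>dd\<in>constraints sig B. Mell l b dd * Q dd cc)"
    if l: "l \<in> labels sig ar" and b: "b \<in> univ B" and cc: "cc \<in> constraints sig A" for l b cc
  proof -
    let ?i = "iB b" and ?j = "jA cc"
    have i: "?i \<in> I" using pidx(1)[OF ipB b] unfolding iB_def .
    have j: "?j \<in> J" using pidx(1)[OF iqA cc] unfolding jA_def .
    have bi: "b \<in> PB ?i" using pidx(2)[OF ipB b] unfolding iB_def .
    have cj: "cc \<in> QA ?j" using pidx(2)[OF iqA cc] unfolding jA_def .
    have "(\<Sum>a\<in>univ A. P b a * Mell l a cc) =
        (\<Sum>a\<in>univ A. (if iA a = ?i then 1 / real (card (PA ?i)) else 0) * (if Mlab a cc = l then 1 else 0))"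
      unfolding P_def Mell_def by (intro sum.cong) auto
    also have "\<dots> = 1 / real (card (PA ?i)) * real (card {a \<in> PA ?i. Mlab a cc = l})"
      by (rule sum_block[OF fA]) (simp add: iA_def pidx_block[OF ipA i])
    also have "\<dots> = real (d l ?j ?i) / real (card (PA ?i))"
      using eA i j l cj unfolding equitable_with_def by auto
    also have "\<dots> = real (c l ?i ?j) / real (card (QA ?j))"
      by (rule equitable_identity[OF eA sA i j l])
    also have "\<dots> = 1 / real (card (QA ?j)) * real (card {dd \<in> QB ?j. Mlab b dd = l})"
      using eB i j l bi unfolding equitable_with_def by auto
    also have "\<dots> = (\<Sum>dd\<in>constraints sig B. (if jB dd = ?j then 1 / real (card (QA ?j)) else 0) * (if Mlab b dd = l then 1 else 0))"
      by (rule sum_block[OF fCB, symmetric]) (simp add: jB_def pidx_block[OF iqB j])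
    also have "\<dots> = (\<Sum>dd\<in>constraints sig B. Mell l b dd * Q dd cc)"
      unfolding Q_def Mell_def by (intro sum.cong) auto
    finally show ?thesis .
  qed
  have eq2: "(\<Sum>cc\<in>constraints sig A. Mell l a cc * Q dd cc) = (\<Sum>b\<in>univ B. P b a * Mell l b dd)"
    if l: "l \<in> labels sig ar" and a: "a \<in> univ A" and dd: "dd \<in> constraints sig B" for l a dd
  proof -
    let ?i = "iA a" and ?j = "jB dd"
    have i: "?i \<in> I" using pidx(1)[OF ipA a] unfolding iA_def .
    have j: "?j \<in> J" using pidx(1)[OF iqB dd] unfolding jB_def .
    have ai: "a \<in> PA ?i" using pidx(2)[OF ipA a] unfolding iA_def .
    have dj: "dd \<in> QB ?j" using pidx(2)[OF iqB dd] unfolding jB_def .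
    have "(\<Sum>cc\<in>constraints sig A. Mell l a cc * Q dd cc) =
        (\<Sum>cc\<in>constraints sig A. (if jA cc = ?j then 1 / real (card (QA ?j)) else 0) * (if Mlab a cc = l then 1 else 0))"
      unfolding Q_def Mell_def by (intro sum.cong) auto
    also have "\<dots> = 1 / real (card (QA ?j)) * real (card {cc \<in> QA ?j. Mlab a cc = l})"
      by (rule sum_block[OF fCA]) (simp add: jA_def pidx_block[OF iqA j])
    also have "\<dots> = real (c l ?i ?j) / real (card (QA ?j))"
      using eA i j l ai unfolding equitable_with_def by auto
    also have "\<dots> = real (d l ?j ?i) / real (card (PA ?i))"
      by (rule equitable_identity[OF eA sA i j l, symmetric])
    also have "\<dots> = 1 / real (card (PA ?i)) * real (card {b \<in> PB ?i. Mlab b dd = l})"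
      using eB i j l dj unfolding equitable_with_def by auto
    also have "\<dots> = (\<Sum>b\<in>univ B. (if iB b = ?i then 1 / real (card (PA ?i)) else 0) * (if Mlab b dd = l then 1 else 0))"
      by (rule sum_block[OF fB, symmetric]) (simp add: iB_def pidx_block[OF ipB i])
    also have "\<dots> = (\<Sum>b\<in>univ B. P b a * Mell l b dd)"
      unfolding P_def Mell_def by (intro sum.cong) auto
    finally show ?thesis .
  qed
  show ?thesis unfolding frac_iso_def
    using dsP dsQ eq1 eq2 by blast
qed

fun gdown :: "nat \<Rightarrow> 'r deg \<Rightarrow> 'r deg" where
  "gdown 0 (DMulti M) = (if (\<exists>p\<in>#M. snd p = DElem) then DConstr else DElem)"
| "gdown 0 d = DElem"
| "gdown (Suc k) (DMulti M) = DMulti (image_mset (\<lambda>p. (fst p, gdown k (snd p))) M)"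
| "gdown (Suc k) d = d"

lemma ideg_down:
  assumes sS: "is_structure sig ar S"
  shows "v \<in> fg_vertices sig S \<Longrightarrow> ideg sig S k v = gdown k (ideg sig S (Suc k) v)"
proof (induction k arbitrary: v)
  case 0
  show ?case
  proof (cases v)
    case (Inl a) then show ?thesis by auto
  next
    case (Inr c)
    then have c: "c \<in> constraints sig S" using 0 unfolding fg_vertices_def by auto
    obtain a where "a \<in> set (snd c)" using constraint_props(6)[OF sS c] by (meson ex_in_conv)
    then show ?thesis using Inr by auto
  qed
next
  case (Suc k)
  show ?case
  proof (cases v)
    case (Inl a)
    have "image_mset (\<lambda>p. (fst p, gdown k (snd p)))
        (image_mset (\<lambda>c. (Mlab a c, ideg sig S (Suc k) (Inr c))) (mset_set {c \<in> constraints sig S. a \<in> set (snd c)}))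
      = image_mset (\<lambda>c. (Mlab a c, ideg sig S k (Inr c))) (mset_set {c \<in> constraints sig S. a \<in> set (snd c)})"
      unfolding multiset.map_comp
    proof (rule image_mset_cong)
      fix c assume "c \<in># mset_set {c \<in> constraints sig S. a \<in> set (snd c)}"
      then have "c \<in> constraints sig S" using finite_constraints[OF sS] by simp
      then have "Inr c \<in> fg_vertices sig S" unfolding fg_vertices_def by auto
      then show "((\<lambda>p. (fst p, gdown k (snd p))) \<circ> (\<lambda>c. (Mlab a c, ideg sig S (Suc k) (Inr c)))) c =
          (Mlab a c, ideg sig S k (Inr c))" using Suc.IH by simp
    qed
    then show ?thesis using Inl by simp
  next
    case (Inr c)
    then have c: "c \<in> constraints sig S" using Suc.prems unfolding fg_vertices_def by auto
    have "image_mset (\<lambda>p. (fst p, gdown k (snd p)))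
        (image_mset (\<lambda>a. (Mlab a c, ideg sig S (Suc k) (Inl a))) (mset_set (set (snd c))))
      = image_mset (\<lambda>a. (Mlab a c, ideg sig S k (Inl a))) (mset_set (set (snd c)))"
      unfolding multiset.map_comp
    proof (rule image_mset_cong)
      fix a assume "a \<in># mset_set (set (snd c))"
      then have "a \<in> univ S" using constraint_props(4)[OF sS c] by auto
      then have "Inl a \<in> fg_vertices sig S" unfolding fg_vertices_def by auto
      then show "((\<lambda>p. (fst p, gdown k (snd p))) \<circ> (\<lambda>a. (Mlab a c, ideg sig S (Suc k) (Inl a)))) a =
          (Mlab a c, ideg sig S k (Inl a))" using Suc.IH by simp
    qed
    then show ?thesis using Inr by simp
  qed
qed

lemma exists_K:
  fixes C :: "(nat \<Rightarrow> 'd) set"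
  assumes fC: "finite C" and g: "\<forall>T\<in>C. \<forall>k. T k = g k (T (Suc k))"
  shows "\<exists>K. \<forall>T\<in>C. \<forall>T'\<in>C. T K = T' K \<longrightarrow> T = T'"
proof -
  define D where "D = {p \<in> C \<times> C. fst p \<noteq> snd p}"
  define kk :: "(nat \<Rightarrow> 'd) \<times> (nat \<Rightarrow> 'd) \<Rightarrow> nat" where "kk = (\<lambda>p. SOME k. fst p k \<noteq> snd p k)"
  define K where "K = Max (insert 0 (kk ` D))"
  have fD: "finite D" unfolding D_def using fC by simp
  show ?thesis
  proof (intro exI ballI impI)
    fix T T' assume T: "T \<in> C" and T': "T' \<in> C" and eqK: "T K = T' K"
    have down: "T (K - m) = T' (K - m)" for m
    proof (induction m)
      case 0 then show ?case using eqK by simp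
    next
      case (Suc m)
      show ?case
      proof (cases "K - m = 0")
        case True then show ?thesis using Suc by simp
      next
        case False
        then have e: "K - m = Suc (K - Suc m)" by simp
        have "T (K - Suc m) = g (K - Suc m) (T (K - m))" using g T e by metis
        also have "\<dots> = g (K - Suc m) (T' (K - m))" using Suc by simp
        also have "\<dots> = T' (K - Suc m)" using g T' e by metis
        finally show ?thesis .
      qed
    qed
    show "T = T'"
    proof (rule ccontr)
      assume ne: "T \<noteq> T'"
      then have p: "(T, T') \<in> D" unfolding D_def using T T' by simp
      have ex: "\<exists>k. T k \<noteq> T' k" using ne by auto
      have k1: "T (kk (T, T')) \<noteq> T' (kk (T, T'))" unfolding kk_def using someI_ex[OF ex] by simp
      have k2: "kk (T, T') \<le> K" unfolding K_def using fD p by (intro Max_ge) auto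
      have "T (K - (K - kk (T, T'))) = T' (K - (K - kk (T, T')))" by (rule down)
      then show False using k1 k2 by simp
    qed
  qed
qed

fun mof :: "'r deg \<Rightarrow> ('r label \<times> 'r deg) multiset" where
  "mof (DMulti M) = M"
| "mof _ = {#}"

definition relOf :: "(nat \<Rightarrow> 'r deg) \<Rightarrow> 'r" where
  "relOf T = snd (fst (SOME p. p \<in># mof (T 1)))"

lemma relOf_con:
  assumes sS: "is_structure sig ar S" and c: "c \<in> constraints sig S"
  shows "relOf (\<lambda>j. ideg sig S j (Inr c)) = fst c"
proof -
  let ?M = "image_mset (\<lambda>a. (Mlab a c, ideg sig S 0 (Inl a))) (mset_set (set (snd c)))"
  have m: "mof (ideg sig S 1 (Inr c)) = ?M" by (simp add: One_nat_def)
  obtain a where "a \<in> set (snd c)" using constraint_props(6)[OF sS c] by (meson ex_in_conv)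
  then have ex: "\<exists>p. p \<in># ?M" by auto
  have "(SOME p. p \<in># ?M) \<in># ?M" using someI_ex[OF ex] .
  then have "snd (fst (SOME p. p \<in># ?M)) = fst c" by auto
  then show ?thesis unfolding relOf_def m .
qed

lemma Mlab_nmem: "a \<notin> set (snd c) \<Longrightarrow> fst (Mlab a c) = {}"
  unfolding Mlab_def by (auto simp: in_set_conv_nth)

lemma Mlab_empty_iff: "Mlab a c = ({}, R) \<longleftrightarrow> fst c = R \<and> a \<notin> set (snd c)"
  using Mlab_mem2[of a c] Mlab_nmem[of a c] by (auto simp: prod_eq_iff)

definition cntE :: "nat \<Rightarrow> (nat \<Rightarrow> 'r deg) \<Rightarrow> 'r label \<Rightarrow> (nat \<Rightarrow> 'r deg) \<Rightarrow> nat \<Rightarrow> nat" where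
  "cntE K T l T' n = (if fst l \<noteq> {} then count (mof (T (Suc K))) (l, T' K)
     else (if relOf T' = snd l then n else 0) -
       size (filter_mset (\<lambda>p. snd (fst p) = snd l \<and> snd p = T' K) (mof (T (Suc K)))))"

definition cntC :: "nat \<Rightarrow> (nat \<Rightarrow> 'r deg) \<Rightarrow> 'r label \<Rightarrow> (nat \<Rightarrow> 'r deg) \<Rightarrow> nat \<Rightarrow> nat" where
  "cntC K T' l T n = (if fst l \<noteq> {} then count (mof (T' (Suc K))) (l, T K)
     else if relOf T' = snd l then n - size (filter_mset (\<lambda>p. snd p = T K) (mof (T' (Suc K)))) else 0)"

lemma el_count:
  assumes sS: "is_structure sig ar S" and a: "a \<in> univ S"
    and H: "\<forall>x\<in>constraints sig S. ((\<lambda>j. ideg sig S j (Inr x)) = T') = (ideg sig S K (Inr x) = T' K)"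
  shows "card {x \<in> constraints sig S. (\<lambda>j. ideg sig S j (Inr x)) = T' \<and> Mlab a x = l} =
    cntE K (\<lambda>j. ideg sig S j (Inl a)) l T' (card {x \<in> constraints sig S. (\<lambda>j. ideg sig S j (Inr x)) = T'})"
proof -
  let ?F = "\<lambda>x. (\<lambda>j. ideg sig S j (Inr x))"
  let ?X = "{c \<in> constraints sig S. a \<in> set (snd c)}"
  let ?M = "image_mset (\<lambda>c. (Mlab a c, ideg sig S K (Inr c))) (mset_set ?X)"
  have fC: "finite (constraints sig S)" using finite_constraints[OF sS] .
  have fX: "finite ?X" using fC by simp
  have m: "mof (ideg sig S (Suc K) (Inl a)) = ?M" by simp
  show ?thesis
  proof (cases "fst l \<noteq> {}")
    case True
    have "count ?M (l, T' K) = card {c \<in> constraints sig S. Mlab a c = l \<and> ideg sig S K (Inr c) = T' K}"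
      using count_el[OF sS, of a K l "T' K"] True by simp
    also have "\<dots> = card {x \<in> constraints sig S. ?F x = T' \<and> Mlab a x = l}"
      using H by (intro arg_cong[where f=card]) auto
    finally show ?thesis unfolding cntE_def m using True by simp
  next
    case False
    obtain R where l: "l = ({}, R)" using False by (cases l) auto
    have s1: "{x \<in> constraints sig S. ?F x = T' \<and> Mlab a x = l} =
        {x \<in> constraints sig S. ?F x = T' \<and> fst x = R} - {x \<in> constraints sig S. ?F x = T' \<and> fst x = R \<and> a \<in> set (snd x)}"
      unfolding l Mlab_empty_iff by auto
    have c1: "card {x \<in> constraints sig S. ?F x = T' \<and> fst x = R} =
        (if relOf T' = R then card {x \<in> constraints sig S. ?F x = T'} else 0)"
    proof (cases "{x \<in> constraints sig S. ?F x = T'} = {}")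
      case True
      have e: "{x \<in> constraints sig S. ?F x = T' \<and> fst x = R} = {}" using True by auto
      show ?thesis unfolding e True by simp
    next
      case False
      then obtain x0 where x0: "x0 \<in> constraints sig S" "?F x0 = T'" by auto
      have r: "relOf T' = fst x" if "x \<in> constraints sig S" "?F x = T'" for x
        using relOf_con[OF sS that(1)] that(2) by simp
      show ?thesis
      proof (cases "relOf T' = R")
        case True
        then show ?thesis using r by (auto intro!: arg_cong[where f=card])
      next
        case False
        have e: "{x \<in> constraints sig S. ?F x = T' \<and> fst x = R} = {}" using r False by blast
        show ?thesis unfolding e using False by simp
      qed
    qed
    have c2: "card {x \<in> constraints sig S. ?F x = T' \<and> fst x = R \<and> a \<in> set (snd x)} =
        size (filter_mset (\<lambda>p. snd (fst p) = R \<and> snd p = T' K) ?M)"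
    proof -
      have "size (filter_mset (\<lambda>p. snd (fst p) = R \<and> snd p = T' K) ?M) =
          card {x \<in> ?X. fst x = R \<and> ideg sig S K (Inr x) = T' K}"
        using fX by (simp add: filter_mset_image_mset)
      also have "\<dots> = card {x \<in> constraints sig S. ?F x = T' \<and> fst x = R \<and> a \<in> set (snd x)}"
        using H by (intro arg_cong[where f=card]) auto
      finally show ?thesis by simp
    qed
    have sub: "{x \<in> constraints sig S. ?F x = T' \<and> fst x = R \<and> a \<in> set (snd x)} \<subseteq>
        {x \<in> constraints sig S. ?F x = T' \<and> fst x = R}" by auto
    have "card {x \<in> constraints sig S. ?F x = T' \<and> Mlab a x = l} =
        card {x \<in> constraints sig S. ?F x = T' \<and> fst x = R} -
        card {x \<in> constraints sig S. ?F x = T' \<and> fst x = R \<and> a \<in> set (snd x)}"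
      unfolding s1 by (rule card_Diff_subset) (use fC sub in \<open>auto intro: finite_subset\<close>)
    then show ?thesis unfolding cntE_def m using l c1 c2 by simp
  qed
qed

lemma con_count:
  assumes sS: "is_structure sig ar S" and x: "x \<in> constraints sig S"
    and H: "\<forall>a\<in>univ S. ((\<lambda>j. ideg sig S j (Inl a)) = T) = (ideg sig S K (Inl a) = T K)"
  shows "card {a \<in> univ S. (\<lambda>j. ideg sig S j (Inl a)) = T \<and> Mlab a x = l} =
    cntC K (\<lambda>j. ideg sig S j (Inr x)) l T (card {a \<in> univ S. (\<lambda>j. ideg sig S j (Inl a)) = T})"
proof -
  let ?F = "\<lambda>a. (\<lambda>j. ideg sig S j (Inl a))"
  let ?M = "image_mset (\<lambda>a. (Mlab a x, ideg sig S K (Inl a))) (mset_set (set (snd x)))"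
  have fU: "finite (univ S)" using finite_univ[OF sS] .
  have sub0: "set (snd x) \<subseteq> univ S" using constraint_props(4)[OF sS x] .
  have m: "mof (ideg sig S (Suc K) (Inr x)) = ?M" by simp
  have rel: "relOf (\<lambda>j. ideg sig S j (Inr x)) = fst x" using relOf_con[OF sS x] .
  show ?thesis
  proof (cases "fst l \<noteq> {}")
    case True
    have "count ?M (l, T K) = card {a \<in> univ S. Mlab a x = l \<and> ideg sig S K (Inl a) = T K}"
      using count_con[OF sS x, of K l "T K"] True by simp
    also have "\<dots> = card {a \<in> univ S. ?F a = T \<and> Mlab a x = l}"
      using H by (intro arg_cong[where f=card]) auto
    finally show ?thesis unfolding cntC_def m using True by simp
  next
    case False
    obtain R where l: "l = ({}, R)" using False by (cases l) auto
    show ?thesis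
    proof (cases "fst x = R")
      case False
      have e: "{a \<in> univ S. ?F a = T \<and> Mlab a x = l} = {}" using False unfolding l
        by (auto dest: arg_cong[where f=snd])
      show ?thesis unfolding e cntC_def rel using False l by simp
    next
      case True
      have s1: "{a \<in> univ S. ?F a = T \<and> Mlab a x = l} =
          {a \<in> univ S. ?F a = T} - {a \<in> set (snd x). ?F a = T}"
        using True sub0 unfolding l Mlab_empty_iff by auto
      have c2: "card {a \<in> set (snd x). ?F a = T} = size (filter_mset (\<lambda>p. snd p = T K) ?M)"
      proof -
        have "size (filter_mset (\<lambda>p. snd p = T K) ?M) = card {a \<in> set (snd x). ideg sig S K (Inl a) = T K}"
          by (simp add: filter_mset_image_mset)
        also have "\<dots> = card {a \<in> set (snd x). ?F a = T}"
          using H sub0 by (intro arg_cong[where f=card]) auto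
        finally show ?thesis by simp
      qed
      have "card {a \<in> univ S. ?F a = T \<and> Mlab a x = l} = card {a \<in> univ S. ?F a = T} - card {a \<in> set (snd x). ?F a = T}"
        unfolding s1 by (rule card_Diff_subset) (use sub0 in auto)
      then show ?thesis unfolding cntC_def m rel c2 using True l by simp
    qed
  qed
qed

lemma equitable_build:
  assumes sS: "is_structure sig ar S"
    and bE: "bij_betw fE I ColE" and CE: "ColE = (\<lambda>a. (\<lambda>j. ideg sig S j (Inl a))) ` univ S"
    and bC: "bij_betw fC J ColC" and CC: "ColC = (\<lambda>x. (\<lambda>j. ideg sig S j (Inr x))) ` constraints sig S"
    and HE: "\<forall>T\<in>ColE. \<forall>a\<in>univ S. ((\<lambda>j. ideg sig S j (Inl a)) = T) = (ideg sig S K (Inl a) = T K)"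
    and HC: "\<forall>T\<in>ColC. \<forall>x\<in>constraints sig S. ((\<lambda>j. ideg sig S j (Inr x)) = T) = (ideg sig S K (Inr x) = T K)"
    and nE: "\<forall>i\<in>I. card {a \<in> univ S. (\<lambda>j. ideg sig S j (Inl a)) = fE i} = NE i"
    and nC: "\<forall>j\<in>J. card {x \<in> constraints sig S. (\<lambda>j. ideg sig S j (Inr x)) = fC j} = NC j"
  shows "equitable_with sig ar S I J (\<lambda>i. {a \<in> univ S. (\<lambda>j. ideg sig S j (Inl a)) = fE i})
     (\<lambda>j. {x \<in> constraints sig S. (\<lambda>j. ideg sig S j (Inr x)) = fC j})
     (\<lambda>l i j. cntE K (fE i) l (fC j) (NC j)) (\<lambda>l j i. cntC K (fC j) l (fE i) (NE i))"
proof -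
  let ?FE = "\<lambda>a. (\<lambda>j. ideg sig S j (Inl a))" and ?FC = "\<lambda>x. (\<lambda>j. ideg sig S j (Inr x))"
  have imE: "fE ` I = ColE" and imC: "fC ` J = ColC"
    using bE bC by (auto simp: bij_betw_def)
  have injE: "inj_on fE I" and injC: "inj_on fC J" using bE bC by (auto simp: bij_betw_def)
  have ipE: "indexed_partition I (\<lambda>i. {a \<in> univ S. ?FE a = fE i}) (univ S)"
    unfolding indexed_partition_def
  proof (intro conjI ballI impI)
    fix i assume "i \<in> I"
    then have "fE i \<in> ColE" using imE by (metis imageI)
    then have "fE i \<in> ?FE ` univ S" by (simp only: CE)
    then obtain x where "x \<in> univ S" "fE i = ?FE x" by (rule imageE)
    then have "x \<in> {a \<in> univ S. ?FE a = fE i}" by simp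
    then show "{a \<in> univ S. ?FE a = fE i} \<noteq> {}" by (metis empty_iff)
  next
    fix i j assume "i \<in> I" "j \<in> I" "i \<noteq> j"
    then have "fE i \<noteq> fE j" using injE by (meson inj_onD)
    then show "{a \<in> univ S. ?FE a = fE i} \<inter> {a \<in> univ S. ?FE a = fE j} = {}" by auto
  next
    show "(\<Union>i\<in>I. {a \<in> univ S. ?FE a = fE i}) = univ S"
    proof (intro equalityI subsetI)
      fix a assume a: "a \<in> univ S"
      then have "?FE a \<in> ?FE ` univ S" by (rule imageI)
      then have "?FE a \<in> fE ` I" by (simp only: imE CE)
      then obtain i where "i \<in> I" "?FE a = fE i" by (rule imageE) simp
      then show "a \<in> (\<Union>i\<in>I. {a \<in> univ S. ?FE a = fE i})" using a by auto
    qed auto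
  qed
  have ipC: "indexed_partition J (\<lambda>j. {x \<in> constraints sig S. ?FC x = fC j}) (constraints sig S)"
    unfolding indexed_partition_def
  proof (intro conjI ballI impI)
    fix i assume "i \<in> J"
    then have "fC i \<in> ColC" using imC by (metis imageI)
    then have "fC i \<in> ?FC ` constraints sig S" by (simp only: CC)
    then obtain x where "x \<in> constraints sig S" "fC i = ?FC x" by (rule imageE)
    then have "x \<in> {a \<in> constraints sig S. ?FC a = fC i}" by simp
    then show "{a \<in> constraints sig S. ?FC a = fC i} \<noteq> {}" by (metis empty_iff)
  next
    fix i j assume "i \<in> J" "j \<in> J" "i \<noteq> j"
    then have "fC i \<noteq> fC j" using injC by (meson inj_onD)
    then show "{a \<in> constraints sig S. ?FC a = fC i} \<inter> {a \<in> constraints sig S. ?FC a = fC j} = {}" by auto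
  next
    show "(\<Union>i\<in>J. {a \<in> constraints sig S. ?FC a = fC i}) = constraints sig S"
    proof (intro equalityI subsetI)
      fix a assume a: "a \<in> constraints sig S"
      then have "?FC a \<in> ?FC ` constraints sig S" by (rule imageI)
      then have "?FC a \<in> fC ` J" by (simp only: imC CC)
      then obtain i where "i \<in> J" "?FC a = fC i" by (rule imageE) simp
      then show "a \<in> (\<Union>i\<in>J. {a \<in> constraints sig S. ?FC a = fC i})" using a by auto
    qed auto
  qed
  show ?thesis unfolding equitable_with_def
  proof (intro conjI ipE ipC ballI)
    fix i j l a
    assume i: "i \<in> I" and j: "j \<in> J" and a: "a \<in> {a \<in> univ S. ?FE a = fE i}"
    have fj: "fC j \<in> ColC" using bC j by (auto simp: bij_betw_def)
    have H: "\<forall>x\<in>constraints sig S. (?FC x = fC j) = (ideg sig S K (Inr x) = fC j K)" using HC fj by blast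
    have "card {x \<in> {x \<in> constraints sig S. ?FC x = fC j}. Mlab a x = l} =
        card {x \<in> constraints sig S. ?FC x = fC j \<and> Mlab a x = l}" by (intro arg_cong[where f=card]) auto
    also have "\<dots> = cntE K (?FE a) l (fC j) (card {x \<in> constraints sig S. ?FC x = fC j})"
      using el_count[OF sS _ H] a by simp
    also have "\<dots> = cntE K (fE i) l (fC j) (NC j)" using a nC j by simp
    finally show "card {x \<in> {x \<in> constraints sig S. ?FC x = fC j}. Mlab a x = l} = cntE K (fE i) l (fC j) (NC j)" .
  next
    fix i j l x
    assume i: "i \<in> I" and j: "j \<in> J" and x: "x \<in> {x \<in> constraints sig S. ?FC x = fC j}"
    have fi: "fE i \<in> ColE" using bE i by (auto simp: bij_betw_def)
    have H: "\<forall>a\<in>univ S. (?FE a = fE i) = (ideg sig S K (Inl a) = fE i K)" using HE fi by blast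
    have "card {a \<in> {a \<in> univ S. ?FE a = fE i}. Mlab a x = l} =
        card {a \<in> univ S. ?FE a = fE i \<and> Mlab a x = l}" by (intro arg_cong[where f=card]) auto
    also have "\<dots> = cntC K (?FC x) l (fE i) (card {a \<in> univ S. ?FE a = fE i})"
      using con_count[OF sS _ H] x by simp
    also have "\<dots> = cntC K (fC j) l (fE i) (NE i)" using x nE i by simp
    finally show "card {a \<in> {a \<in> univ S. ?FE a = fE i}. Mlab a x = l} = cntC K (fC j) l (fE i) (NE i)" .
  qed
qed

lemma in_image_card:
  assumes "finite X" shows "T \<in> f ` X \<longleftrightarrow> card {x \<in> X. f x = T} \<noteq> 0"
  using assms by auto

lemma empty_el_con:
  "T 0 = DElem \<Longrightarrow> {x \<in> constraints sig S. (\<lambda>j. ideg sig S j (Inr x)) = T} = {}"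
  "T 0 \<noteq> DElem \<Longrightarrow> {x \<in> univ S. (\<lambda>j. ideg sig S j (Inl x)) = T} = {}"
  by auto

lemma ids_cards:
  assumes sA: "is_structure sig ar A" and sB: "is_structure sig ar B"
    and ids: "iterated_degree_sequence sig A = iterated_degree_sequence sig B"
  shows "card {a \<in> univ A. (\<lambda>j. ideg sig A j (Inl a)) = T} = card {a \<in> univ B. (\<lambda>j. ideg sig B j (Inl a)) = T}"
    and "card {x \<in> constraints sig A. (\<lambda>j. ideg sig A j (Inr x)) = T} =
         card {x \<in> constraints sig B. (\<lambda>j. ideg sig B j (Inr x)) = T}"
proof -
  have c: "count (iterated_degree_sequence sig A) T = count (iterated_degree_sequence sig B) T"
    using ids by simp
  show "card {a \<in> univ A. (\<lambda>j. ideg sig A j (Inl a)) = T} = card {a \<in> univ B. (\<lambda>j. ideg sig B j (Inl a)) = T}"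
  proof (cases "T 0 = DElem")
    case True then show ?thesis using c unfolding count_ids[OF sA] count_ids[OF sB] empty_el_con(1)[where T=T, OF True] by simp
  next
    case False then show ?thesis unfolding empty_el_con(2)[where T=T, OF False] by simp
  qed
  show "card {x \<in> constraints sig A. (\<lambda>j. ideg sig A j (Inr x)) = T} =
         card {x \<in> constraints sig B. (\<lambda>j. ideg sig B j (Inr x)) = T}"
  proof (cases "T 0 = DElem")
    case True then show ?thesis unfolding empty_el_con(1)[where T=T, OF True] by simp
  next
    case False then show ?thesis using c unfolding count_ids[OF sA] count_ids[OF sB] empty_el_con(2)[where T=T, OF False] by simp
  qed
qed

lemma ids_imp_cep:
  assumes sA: "is_structure sig ar A" and sB: "is_structure sig ar B"
    and ids: "iterated_degree_sequence sig A = iterated_degree_sequence sig B"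
  shows "common_equitable_partition sig ar A B"
proof -
  let ?FA = "\<lambda>v. (\<lambda>j. ideg sig A j v)" and ?FB = "\<lambda>v. (\<lambda>j. ideg sig B j v)"
  note fA = finite_univ[OF sA] and fB = finite_univ[OF sB]
    and fCA = finite_constraints[OF sA] and fCB = finite_constraints[OF sB]
  note cE = ids_cards(1)[OF sA sB ids] and cC = ids_cards(2)[OF sA sB ids]
  define ColE where "ColE = (\<lambda>a. ?FA (Inl a)) ` univ A"
  define ColC where "ColC = (\<lambda>x. ?FA (Inr x)) ` constraints sig A"
  have ColEB: "ColE = (\<lambda>a. ?FB (Inl a)) ` univ B"
    unfolding ColE_def by (rule set_eqI) (simp only: in_image_card[OF fA] in_image_card[OF fB] cE)
  have ColCB: "ColC = (\<lambda>x. ?FB (Inr x)) ` constraints sig B"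
    unfolding ColC_def by (rule set_eqI) (simp only: in_image_card[OF fCA] in_image_card[OF fCB] cC)
  have fE: "finite ColE" unfolding ColE_def using fA by simp
  have fC: "finite ColC" unfolding ColC_def using fCA by simp
  have gd: "\<forall>T\<in>ColE \<union> ColC. \<forall>k. T k = gdown k (T (Suc k))"
  proof (intro ballI allI)
    fix T k assume "T \<in> ColE \<union> ColC"
    then obtain v where v: "v \<in> fg_vertices sig A" "T = ?FA v"
      unfolding ColE_def ColC_def fg_vertices_def by blast
    show "T k = gdown k (T (Suc k))" unfolding v(2) by (rule ideg_down[OF sA v(1)])
  qed
  obtain K where K: "\<forall>T\<in>ColE \<union> ColC. \<forall>T'\<in>ColE \<union> ColC. T K = T' K \<longrightarrow> T = T'"
    using exists_K[OF finite_UnI[OF fE fC] gd] by (elim exE)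
  have HEA: "\<forall>T\<in>ColE. \<forall>a\<in>univ A. (?FA (Inl a) = T) = (ideg sig A K (Inl a) = T K)"
  proof (intro ballI)
    fix T a assume T: "T \<in> ColE" and a: "a \<in> univ A"
    have "?FA (Inl a) \<in> ColE" using a unfolding ColE_def by auto
    then show "(?FA (Inl a) = T) = (ideg sig A K (Inl a) = T K)" using K T by auto
  qed
  have HCA: "\<forall>T\<in>ColC. \<forall>x\<in>constraints sig A. (?FA (Inr x) = T) = (ideg sig A K (Inr x) = T K)"
  proof (intro ballI)
    fix T x assume T: "T \<in> ColC" and x: "x \<in> constraints sig A"
    have "?FA (Inr x) \<in> ColC" using x unfolding ColC_def by auto
    then show "(?FA (Inr x) = T) = (ideg sig A K (Inr x) = T K)" using K T by auto
  qed
  have HEB: "\<forall>T\<in>ColE. \<forall>a\<in>univ B. (?FB (Inl a) = T) = (ideg sig B K (Inl a) = T K)"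
  proof (intro ballI)
    fix T a assume T: "T \<in> ColE" and a: "a \<in> univ B"
    have "?FB (Inl a) \<in> ColE" using ColEB a by auto
    then show "(?FB (Inl a) = T) = (ideg sig B K (Inl a) = T K)" using K T by auto
  qed
  have HCB: "\<forall>T\<in>ColC. \<forall>x\<in>constraints sig B. (?FB (Inr x) = T) = (ideg sig B K (Inr x) = T K)"
  proof (intro ballI)
    fix T x assume T: "T \<in> ColC" and x: "x \<in> constraints sig B"
    have "?FB (Inr x) \<in> ColC" using ColCB x by auto
    then show "(?FB (Inr x) = T) = (ideg sig B K (Inr x) = T K)" using K T by auto
  qed
  obtain eE where bE: "bij_betw eE {0..<card ColE} ColE" using ex_bij_betw_nat_finite[OF fE] by blast
  obtain eC where bC: "bij_betw eC {0..<card ColC} ColC" using ex_bij_betw_nat_finite[OF fC] by blast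
  define NE where "NE = (\<lambda>i. card {a \<in> univ A. ?FA (Inl a) = eE i})"
  define NC where "NC = (\<lambda>j. card {x \<in> constraints sig A. ?FA (Inr x) = eC j})"
  have eqA: "equitable_with sig ar A {0..<card ColE} {0..<card ColC}
     (\<lambda>i. {a \<in> univ A. ?FA (Inl a) = eE i}) (\<lambda>j. {x \<in> constraints sig A. ?FA (Inr x) = eC j})
     (\<lambda>l i j. cntE K (eE i) l (eC j) (NC j)) (\<lambda>l j i. cntC K (eC j) l (eE i) (NE i))"
    by (rule equitable_build[OF sA bE ColE_def bC ColC_def HEA HCA]) (auto simp: NE_def NC_def)
  have eqB: "equitable_with sig ar B {0..<card ColE} {0..<card ColC}
     (\<lambda>i. {a \<in> univ B. ?FB (Inl a) = eE i}) (\<lambda>j. {x \<in> constraints sig B. ?FB (Inr x) = eC j})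
     (\<lambda>l i j. cntE K (eE i) l (eC j) (NC j)) (\<lambda>l j i. cntC K (eC j) l (eE i) (NE i))"
    by (rule equitable_build[OF sB bE ColEB bC ColCB HEB HCB]) (auto simp: NE_def NC_def cE cC)
  have cP: "\<forall>i\<in>{0..<card ColE}. card {a \<in> univ A. ?FA (Inl a) = eE i} = card {a \<in> univ B. ?FB (Inl a) = eE i}"
    using cE by simp
  have cQ: "\<forall>j\<in>{0..<card ColC}. card {x \<in> constraints sig A. ?FA (Inr x) = eC j} =
      card {x \<in> constraints sig B. ?FB (Inr x) = eC j}"
    using cC by simp
  show ?thesis unfolding common_equitable_partition_def
    by (rule exI)+ (rule conjI[OF eqA conjI[OF eqB conjI[OF cP cQ]]])
qed

lemma graph_basic:
  assumes g: "is_graph sig ar E S" and sS: "is_structure sig ar S"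
  shows "constraints sig S = (\<lambda>t. (E, t)) ` rels S E"
    and "t \<in> rels S E \<Longrightarrow> \<exists>u v. t = [u, v] \<and> u \<noteq> v \<and> u \<in> univ S \<and> v \<in> univ S"
    and "[u, v] \<in> rels S E \<longleftrightarrow> [v, u] \<in> rels S E"
proof -
  have sig: "sig = {E}" and ar: "ar E = 2" using g unfolding is_graph_def by auto
  show "constraints sig S = (\<lambda>t. (E, t)) ` rels S E" unfolding constraints_def sig by auto
  show "[u, v] \<in> rels S E \<longleftrightarrow> [v, u] \<in> rels S E" using g unfolding is_graph_def by blast
  assume t: "t \<in> rels S E"
  have "rels S E \<subseteq> {t. length t = ar E \<and> set t \<subseteq> univ S}"
    using sS unfolding is_structure_def sig by auto
  then have l: "length t = 2" and s: "set t \<subseteq> univ S" using t ar by auto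
  obtain u v where uv: "t = [u, v]" using l
    by (metis (no_types, opaque_lifting) One_nat_def Suc_1 length_0_conv length_Suc_conv)
  have "u \<noteq> v" using g t uv unfolding is_graph_def by blast
  then show "\<exists>u v. t = [u, v] \<and> u \<noteq> v \<and> u \<in> univ S \<and> v \<in> univ S" using uv s by auto
qed

lemma Mlab_pair:
  "Mlab a (R, [u, v]) = ((if u = a then {0} else {}) \<union> (if v = a then {1} else {}), R)"
proof -
  have "{i. i < length [u, v] \<and> [u, v] ! i = a} = (if u = a then {0} else {}) \<union> (if v = a then {1} else {})"
  proof (rule set_eqI)
    fix i show "i \<in> {i. i < length [u, v] \<and> [u, v] ! i = a} \<longleftrightarrow> i \<in> (if u = a then {0} else {}) \<union> (if v = a then {1} else {})"
      by (cases i; cases "i - 1") auto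
  qed
  then show ?thesis unfolding Mlab_def by simp
qed

lemma adj_as_sum:
  assumes g: "is_graph sig ar E S" and sS: "is_structure sig ar S"
  shows "adj E S x y = (\<Sum>c\<in>constraints sig S. Mell ({0}, E) x c * Mell ({1}, E) y c)"
proof -
  note gb = graph_basic[OF g sS]
  have "(\<Sum>c\<in>constraints sig S. Mell ({0}, E) x c * Mell ({1}, E) y c) =
      (\<Sum>c\<in>constraints sig S. if c = (E, [x, y]) then 1 else 0)"
  proof (rule sum.cong)
    fix c assume c: "c \<in> constraints sig S"
    then obtain t where t: "t \<in> rels S E" "c = (E, t)" using gb(1) by auto
    then obtain u v where uv: "t = [u, v]" "u \<noteq> v" using gb(2) by blast
    show "Mell ({0}, E) x c * Mell ({1}, E) y c = (if c = (E, [x, y]) then 1 else 0)"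
      using uv(2) unfolding t uv(1) Mell_def Mlab_pair by auto
  qed simp
  also have "\<dots> = (if [x, y] \<in> rels S E then 1 else 0)"
    using finite_constraints[OF sS] by (simp add: gb(1) image_iff)
  finally show ?thesis unfolding adj_def by simp
qed

lemma graph_labels:
  assumes g: "is_graph sig ar E S" shows "({0}, E) \<in> labels sig ar" "({1}, E) \<in> labels sig ar"
  using g unfolding is_graph_def labels_def by auto

lemma frac_iso_imp_graph:
  assumes sA: "is_structure sig ar A" and sB: "is_structure sig ar B"
    and gA: "is_graph sig ar E A" and gB: "is_graph sig ar E B"
    and fi: "frac_iso sig ar A B"
  shows "frac_iso_graph E A B"
proof -
  obtain P Q where dsP: "doubly_stochastic (univ B) (univ A) P"
    and dsQ: "doubly_stochastic (constraints sig B) (constraints sig A) Q"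
    and eqs: "\<forall>l\<in>labels sig ar.
          (\<forall>b\<in>univ B. \<forall>c\<in>constraints sig A.
             (\<Sum>a\<in>univ A. P b a * Mell l a c) =
             (\<Sum>d\<in>constraints sig B. Mell l b d * Q d c)) \<and>
          (\<forall>a\<in>univ A. \<forall>d\<in>constraints sig B.
             (\<Sum>c\<in>constraints sig A. Mell l a c * Q d c) =
             (\<Sum>b\<in>univ B. P b a * Mell l b d))"
    using fi unfolding frac_iso_def by blast
  let ?l0 = "({0::nat}, E)" and ?l1 = "({1::nat}, E)"
  have l0: "?l0 \<in> labels sig ar" and l1: "?l1 \<in> labels sig ar" using graph_labels[OF gA] by auto
  let ?CA = "constraints sig A" and ?CB = "constraints sig B"
  have main: "(\<Sum>a'\<in>univ A. P b a' * adj E A a' a) = (\<Sum>b'\<in>univ B. adj E B b b' * P b' a)"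
    if b: "b \<in> univ B" and a: "a \<in> univ A" for b a
  proof -
    have "(\<Sum>a'\<in>univ A. P b a' * adj E A a' a) =
        (\<Sum>a'\<in>univ A. P b a' * (\<Sum>c\<in>?CA. Mell ?l0 a' c * Mell ?l1 a c))"
      unfolding adj_as_sum[OF gA sA] ..
    also have "\<dots> = (\<Sum>c\<in>?CA. (\<Sum>a'\<in>univ A. P b a' * Mell ?l0 a' c) * Mell ?l1 a c)"
      by (simp add: sum_distrib_left sum_distrib_right mult_ac sum.swap[of _ "univ A"])
    also have "\<dots> = (\<Sum>c\<in>?CA. (\<Sum>d\<in>?CB. Mell ?l0 b d * Q d c) * Mell ?l1 a c)"
      using eqs l0 b by simp
    also have "\<dots> = (\<Sum>d\<in>?CB. Mell ?l0 b d * (\<Sum>c\<in>?CA. Mell ?l1 a c * Q d c))"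
      by (simp add: sum_distrib_left sum_distrib_right mult_ac sum.swap[of _ "?CA"])
    also have "\<dots> = (\<Sum>d\<in>?CB. Mell ?l0 b d * (\<Sum>b'\<in>univ B. P b' a * Mell ?l1 b' d))"
      using eqs l1 a by simp
    also have "\<dots> = (\<Sum>b'\<in>univ B. (\<Sum>d\<in>?CB. Mell ?l0 b d * Mell ?l1 b' d) * P b' a)"
      by (simp add: sum_distrib_left sum_distrib_right mult_ac sum.swap[of _ "?CB"])
    also have "\<dots> = (\<Sum>b'\<in>univ B. adj E B b b' * P b' a)"
      unfolding adj_as_sum[OF gB sB] ..
    finally show ?thesis .
  qed
  show ?thesis unfolding frac_iso_graph_def using dsP main by blast
qed

lemma graph_step:
  fixes P :: "'b \<Rightarrow> 'a \<Rightarrow> real"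
  assumes fA: "finite A" and fB: "finite B" and ds: "doubly_stochastic B A P"
    and PN: "\<forall>b\<in>B. \<forall>a\<in>A. (\<Sum>a'\<in>A. P b a' * NA a' a) = (\<Sum>b'\<in>B. NB b b' * P b' a)"
    and symA: "\<And>x y. NA x y = NA y x" and symB: "\<And>x y. NB x y = NB y x"
    and compat: "\<And>b a. b \<in> B \<Longrightarrow> a \<in> A \<Longrightarrow> P b a > 0 \<Longrightarrow> wA a = wB b"
    and b: "b \<in> B" and a: "a \<in> A" and pos: "P b a > 0"
  shows "(\<Sum>v\<in>A. NA a v * wA v) = (\<Sum>v\<in>B. NB b v * wB v)"
proof -
  note q = ds_const[where f = wA and g = wB, OF ds compat]
  show ?thesis
  proof (rule ds_support[OF fA fB ds _ _ b a pos, where x = "\<lambda>a. \<Sum>v\<in>A. NA a v * wA v"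
        and y = "\<lambda>b. \<Sum>v\<in>B. NB b v * wB v"])
    show "\<forall>b\<in>B. (\<Sum>a\<in>A. P b a * (\<Sum>v\<in>A. NA a v * wA v)) = (\<Sum>v\<in>B. NB b v * wB v)"
    proof
      fix b assume b: "b \<in> B"
      have "(\<Sum>a\<in>A. P b a * (\<Sum>v\<in>A. NA a v * wA v)) = (\<Sum>a\<in>A. \<Sum>v\<in>A. P b a * NA a v * wA v)"
        by (simp add: sum_distrib_left mult_ac)
      also have "\<dots> = (\<Sum>v\<in>A. \<Sum>a\<in>A. P b a * NA a v * wA v)" by (rule sum.swap)
      also have "\<dots> = (\<Sum>v\<in>A. (\<Sum>a\<in>A. P b a * NA a v) * wA v)"
        by (simp add: sum_distrib_right)
      also have "\<dots> = (\<Sum>v\<in>A. (\<Sum>b'\<in>B. NB b b' * P b' v) * wA v)" using PN b by simp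
      also have "\<dots> = (\<Sum>v\<in>A. \<Sum>b'\<in>B. NB b b' * P b' v * wA v)"
        by (simp add: sum_distrib_right)
      also have "\<dots> = (\<Sum>b'\<in>B. \<Sum>v\<in>A. NB b b' * P b' v * wA v)" by (rule sum.swap)
      also have "\<dots> = (\<Sum>b'\<in>B. NB b b' * (\<Sum>v\<in>A. P b' v * wA v))"
        by (simp add: sum_distrib_left mult_ac)
      also have "\<dots> = (\<Sum>b'\<in>B. NB b b' * wB b')" using q(1) by simp
      finally show "(\<Sum>a\<in>A. P b a * (\<Sum>v\<in>A. NA a v * wA v)) = (\<Sum>v\<in>B. NB b v * wB v)" .
    qed
    show "\<forall>a\<in>A. (\<Sum>b\<in>B. P b a * (\<Sum>v\<in>B. NB b v * wB v)) = (\<Sum>v\<in>A. NA a v * wA v)"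
    proof
      fix a assume a: "a \<in> A"
      have "(\<Sum>b\<in>B. P b a * (\<Sum>v\<in>B. NB b v * wB v)) = (\<Sum>b\<in>B. \<Sum>v\<in>B. NB v b * P b a * wB v)"
        by (simp add: sum_distrib_left mult_ac symB)
      also have "\<dots> = (\<Sum>v\<in>B. \<Sum>b\<in>B. NB v b * P b a * wB v)" by (rule sum.swap)
      also have "\<dots> = (\<Sum>v\<in>B. (\<Sum>b\<in>B. NB v b * P b a) * wB v)"
        by (simp add: sum_distrib_right)
      also have "\<dots> = (\<Sum>v\<in>B. (\<Sum>a'\<in>A. P v a' * NA a' a) * wB v)" using PN a by simp
      also have "\<dots> = (\<Sum>v\<in>B. \<Sum>a'\<in>A. NA a a' * P v a' * wB v)"
        by (simp add: sum_distrib_left sum_distrib_right mult_ac symA)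
      also have "\<dots> = (\<Sum>a'\<in>A. \<Sum>v\<in>B. NA a a' * P v a' * wB v)" by (rule sum.swap)
      also have "\<dots> = (\<Sum>a'\<in>A. NA a a' * (\<Sum>v\<in>B. P v a' * wB v))"
        by (simp add: sum_distrib_left mult_ac)
      also have "\<dots> = (\<Sum>a'\<in>A. NA a a' * wA a')" using q(2) by simp
      finally show "(\<Sum>b\<in>B. P b a * (\<Sum>v\<in>B. NB b v * wB v)) = (\<Sum>v\<in>A. NA a v * wA v)" .
    qed
  qed
qed

lemma sum3_swap:
  "(\<Sum>u\<in>A. \<Sum>v\<in>C. \<Sum>b\<in>B. X u v b) = (\<Sum>b\<in>B. \<Sum>v\<in>C. \<Sum>u\<in>A. X u v b)"
proof -
  have "(\<Sum>u\<in>A. \<Sum>v\<in>C. \<Sum>b\<in>B. X u v b) = (\<Sum>v\<in>C. \<Sum>u\<in>A. \<Sum>b\<in>B. X u v b)"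
    by (rule sum.swap)
  also have "\<dots> = (\<Sum>v\<in>C. \<Sum>b\<in>B. \<Sum>u\<in>A. X u v b)"
    by (rule sum.cong[OF refl], rule sum.swap)
  also have "\<dots> = (\<Sum>b\<in>B. \<Sum>v\<in>C. \<Sum>u\<in>A. X u v b)" by (rule sum.swap)
  finally show ?thesis .
qed

lemma ds_trick:
  fixes P :: "'b \<Rightarrow> 'a \<Rightarrow> real"
  assumes fA: "finite A" and fB: "finite B" and ds: "doubly_stochastic B A P"
    and PN: "\<forall>b\<in>B. \<forall>a\<in>A. (\<Sum>a'\<in>A. P b a' * NA a' a) = (\<Sum>b'\<in>B. NB b b' * P b' a)"
    and compat: "\<And>b a. b \<in> B \<Longrightarrow> a \<in> A \<Longrightarrow> P b a > 0 \<Longrightarrow> f a = g b"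
  shows "(\<Sum>u\<in>A. \<Sum>v\<in>A. NA u v * \<phi> (f u) (f v)) = (\<Sum>u\<in>B. \<Sum>v\<in>B. NB u v * \<phi> (g u) (g v))"
proof -
  have s1: "(\<Sum>b\<in>B. P b u * \<phi> (g b) (f v)) = \<phi> (f u) (f v)" if u: "u \<in> A" for u v
  proof -
    have c: "\<And>b a. b \<in> B \<Longrightarrow> a \<in> A \<Longrightarrow> P b a > 0 \<Longrightarrow> \<phi> (f a) (f v) = \<phi> (g b) (f v)"
      using compat by simp
    show ?thesis using ds_const(2)[where f = "\<lambda>a. \<phi> (f a) (f v)" and g = "\<lambda>b. \<phi> (g b) (f v)", OF ds c] u
      by simp
  qed
  have s2: "(\<Sum>v\<in>A. P b' v * \<phi> (g b) (f v)) = \<phi> (g b) (g b')" if b': "b' \<in> B" for b b'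
  proof -
    have c: "\<And>b' a. b' \<in> B \<Longrightarrow> a \<in> A \<Longrightarrow> P b' a > 0 \<Longrightarrow> \<phi> (g b) (f a) = \<phi> (g b) (g b')"
      using compat by simp
    show ?thesis using ds_const(1)[where f = "\<lambda>a. \<phi> (g b) (f a)" and g = "\<lambda>b'. \<phi> (g b) (g b')", OF ds c] b'
      by simp
  qed
  have "(\<Sum>u\<in>A. \<Sum>v\<in>A. NA u v * \<phi> (f u) (f v)) = (\<Sum>u\<in>A. \<Sum>v\<in>A. NA u v * (\<Sum>b\<in>B. P b u * \<phi> (g b) (f v)))"
    using s1 by simp
  also have "\<dots> = (\<Sum>u\<in>A. \<Sum>v\<in>A. \<Sum>b\<in>B. P b u * NA u v * \<phi> (g b) (f v))"
    by (simp add: sum_distrib_left mult_ac)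
  also have "\<dots> = (\<Sum>b\<in>B. \<Sum>v\<in>A. \<Sum>u\<in>A. P b u * NA u v * \<phi> (g b) (f v))"
    by (rule sum3_swap)
  also have "\<dots> = (\<Sum>b\<in>B. \<Sum>v\<in>A. (\<Sum>u\<in>A. P b u * NA u v) * \<phi> (g b) (f v))"
    by (simp add: sum_distrib_right)
  also have "\<dots> = (\<Sum>b\<in>B. \<Sum>v\<in>A. (\<Sum>b'\<in>B. NB b b' * P b' v) * \<phi> (g b) (f v))"
    using PN by simp
  also have "\<dots> = (\<Sum>b\<in>B. \<Sum>v\<in>A. \<Sum>b'\<in>B. NB b b' * P b' v * \<phi> (g b) (f v))"
    by (simp add: sum_distrib_right)
  also have "\<dots> = (\<Sum>b\<in>B. \<Sum>b'\<in>B. \<Sum>v\<in>A. NB b b' * P b' v * \<phi> (g b) (f v))"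
    by (rule sum.cong[OF refl], rule sum.swap)
  also have "\<dots> = (\<Sum>b\<in>B. \<Sum>b'\<in>B. NB b b' * (\<Sum>v\<in>A. P b' v * \<phi> (g b) (f v)))"
    by (simp add: sum_distrib_left mult_ac)
  also have "\<dots> = (\<Sum>u\<in>B. \<Sum>v\<in>B. NB u v * \<phi> (g u) (g v))"
    using s2 by simp
  finally show ?thesis .
qed

fun gE :: "nat \<Rightarrow> 'r \<Rightarrow> 'r deg \<Rightarrow> 'r deg \<Rightarrow> 'r deg" where
  "gE 0 E x y = DConstr"
| "gE (Suc j) E x y = DMulti {#(({0}, E), x), (({1}, E), y)#}"

lemma ideg_edge:
  assumes g: "is_graph sig ar E S" and sS: "is_structure sig ar S" and uv: "[u, v] \<in> rels S E"
  shows "ideg sig S j (Inr (E, [u, v])) = gE j E (ideg sig S (j - 1) (Inl u)) (ideg sig S (j - 1) (Inl v))"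
proof (cases j)
  case 0 then show ?thesis by simp
next
  case (Suc j')
  have "u \<noteq> v" using graph_basic(2)[OF g sS uv] by auto
  then show ?thesis using Suc by (simp add: Mlab_pair)
qed

lemma graph_con:
  assumes g: "is_graph sig ar E S" and sS: "is_structure sig ar S" and c: "c \<in> constraints sig S"
  obtains u v where "c = (E, [u, v])" "u \<noteq> v" "u \<in> univ S" "v \<in> univ S" "[u, v] \<in> rels S E"
proof -
  obtain t where t: "t \<in> rels S E" "c = (E, t)" using c graph_basic(1)[OF g sS] by auto
  then obtain u v where "t = [u, v]" "u \<noteq> v" "u \<in> univ S" "v \<in> univ S" using graph_basic(2)[OF g sS] by blast
  then show ?thesis using that t by blast
qed

lemma graph_count:
  assumes g: "is_graph sig ar E S" and sS: "is_structure sig ar S" and a: "a \<in> univ S"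
    and l: "fst l \<noteq> {}"
  shows "card {c \<in> constraints sig S. Mlab a c = l \<and> ideg sig S j (Inr c) = t} =
    (if l = ({0}, E) then card {v \<in> univ S. [a, v] \<in> rels S E \<and>
        gE j E (ideg sig S (j - 1) (Inl a)) (ideg sig S (j - 1) (Inl v)) = t}
     else if l = ({1}, E) then card {v \<in> univ S. [a, v] \<in> rels S E \<and>
        gE j E (ideg sig S (j - 1) (Inl v)) (ideg sig S (j - 1) (Inl a)) = t}
     else 0)"
proof -
  note gb = graph_basic[OF g sS]
  have cons_iff: "c \<in> constraints sig S \<longleftrightarrow> (\<exists>u v. c = (E, [u, v]) \<and> [u, v] \<in> rels S E)" for c
  proof
    assume "c \<in> constraints sig S"
    then obtain t where t: "t \<in> rels S E" "c = (E, t)" using gb(1) by auto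
    then obtain u v where "t = [u, v]" using gb(2) by blast
    then show "\<exists>u v. c = (E, [u, v]) \<and> [u, v] \<in> rels S E" using t by blast
  next
    assume "\<exists>u v. c = (E, [u, v]) \<and> [u, v] \<in> rels S E"
    then show "c \<in> constraints sig S" using gb(1) by auto
  qed
  have irr: "[x, y] \<in> rels S E \<Longrightarrow> x \<noteq> y \<and> x \<in> univ S \<and> y \<in> univ S" for x y
    using gb(2) by fastforce
  show ?thesis
  proof (cases "l = ({0}, E)")
    case True
    have "{c \<in> constraints sig S. Mlab a c = l \<and> ideg sig S j (Inr c) = t} =
        (\<lambda>v. (E, [a, v])) ` {v \<in> univ S. [a, v] \<in> rels S E \<and>
          gE j E (ideg sig S (j - 1) (Inl a)) (ideg sig S (j - 1) (Inl v)) = t}"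
    proof (intro equalityI subsetI)
      fix c assume "c \<in> {c \<in> constraints sig S. Mlab a c = l \<and> ideg sig S j (Inr c) = t}"
      then obtain u v where c: "c = (E, [u, v])" "[u, v] \<in> rels S E" and m: "Mlab a c = l"
        and d: "ideg sig S j (Inr c) = t" using cons_iff by blast
      have "u = a" "v \<noteq> a" using m True unfolding c Mlab_pair by (auto split: if_splits)
      then show "c \<in> (\<lambda>v. (E, [a, v])) ` {v \<in> univ S. [a, v] \<in> rels S E \<and>
          gE j E (ideg sig S (j - 1) (Inl a)) (ideg sig S (j - 1) (Inl v)) = t}"
        using c d irr[of u v] ideg_edge[OF g sS c(2), of j] by auto
    next
      fix c assume "c \<in> (\<lambda>v. (E, [a, v])) ` {v \<in> univ S. [a, v] \<in> rels S E \<and>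
          gE j E (ideg sig S (j - 1) (Inl a)) (ideg sig S (j - 1) (Inl v)) = t}"
      then obtain v where c: "c = (E, [a, v])" and v: "[a, v] \<in> rels S E"
        and d: "gE j E (ideg sig S (j - 1) (Inl a)) (ideg sig S (j - 1) (Inl v)) = t" by blast
      have "a \<noteq> v" using irr[OF v] by simp
      then show "c \<in> {c \<in> constraints sig S. Mlab a c = l \<and> ideg sig S j (Inr c) = t}"
        using c v d True cons_iff ideg_edge[OF g sS v, of j] by (auto simp: Mlab_pair)
    qed
    moreover have "inj (\<lambda>v. (E, [a, v]))" by (auto intro: injI)
    ultimately show ?thesis using True by (simp add: card_image inj_on_subset[of _ UNIV])
  next
    case F0: False
    show ?thesis
    proof (cases "l = ({1}, E)")
      case True
      have "{c \<in> constraints sig S. Mlab a c = l \<and> ideg sig S j (Inr c) = t} =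
          (\<lambda>v. (E, [v, a])) ` {v \<in> univ S. [a, v] \<in> rels S E \<and>
            gE j E (ideg sig S (j - 1) (Inl v)) (ideg sig S (j - 1) (Inl a)) = t}"
      proof (intro equalityI subsetI)
        fix c assume "c \<in> {c \<in> constraints sig S. Mlab a c = l \<and> ideg sig S j (Inr c) = t}"
        then obtain u v where c: "c = (E, [u, v])" "[u, v] \<in> rels S E" and m: "Mlab a c = l"
          and d: "ideg sig S j (Inr c) = t" using cons_iff by blast
        have "v = a" "u \<noteq> a" using m True unfolding c Mlab_pair by (auto split: if_splits)
        then show "c \<in> (\<lambda>v. (E, [v, a])) ` {v \<in> univ S. [a, v] \<in> rels S E \<and>
            gE j E (ideg sig S (j - 1) (Inl v)) (ideg sig S (j - 1) (Inl a)) = t}"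
          using c d irr[of u v] ideg_edge[OF g sS c(2), of j] gb(3)[of u v] by auto
      next
        fix c assume "c \<in> (\<lambda>v. (E, [v, a])) ` {v \<in> univ S. [a, v] \<in> rels S E \<and>
            gE j E (ideg sig S (j - 1) (Inl v)) (ideg sig S (j - 1) (Inl a)) = t}"
        then obtain v where c: "c = (E, [v, a])" and v0: "[a, v] \<in> rels S E"
          and d: "gE j E (ideg sig S (j - 1) (Inl v)) (ideg sig S (j - 1) (Inl a)) = t" by blast
        have v: "[v, a] \<in> rels S E" using v0 gb(3) by blast
        have "a \<noteq> v" using irr[OF v] by auto
        then show "c \<in> {c \<in> constraints sig S. Mlab a c = l \<and> ideg sig S j (Inr c) = t}"
          using c v d True cons_iff ideg_edge[OF g sS v, of j] by (auto simp: Mlab_pair)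
      qed
      moreover have "inj (\<lambda>v. (E, [v, a]))" by (auto intro: injI)
      ultimately show ?thesis using True F0 by (simp add: card_image inj_on_subset[of _ UNIV])
    next
      case F1: False
      have e: "{c \<in> constraints sig S. Mlab a c = l \<and> ideg sig S j (Inr c) = t} = {}"
      proof (rule ccontr)
        assume "{c \<in> constraints sig S. Mlab a c = l \<and> ideg sig S j (Inr c) = t} \<noteq> {}"
        then obtain c where "c \<in> constraints sig S" and m: "Mlab a c = l" by blast
        then obtain u v where c: "c = (E, [u, v])" "[u, v] \<in> rels S E" using cons_iff by blast
        have "u \<noteq> v" using irr[OF c(2)] by simp
        then show False using m F0 F1 l unfolding c Mlab_pair by (auto split: if_splits)
      qed
      show ?thesis unfolding e using F0 F1 by simp
    qed
  qed
qed

lemma card_adj: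
  assumes "finite (univ S)"
  shows "real (card {v \<in> univ S. [a, v] \<in> rels S E \<and> p v}) =
     (\<Sum>v\<in>univ S. adj E S a v * (if p v then 1 else 0))"
proof -
  have "real (card {v \<in> univ S. [a, v] \<in> rels S E \<and> p v}) =
      (\<Sum>v\<in>univ S. if [a, v] \<in> rels S E \<and> p v then 1 else 0)"
    using card_eq_sum_indicator[OF assms] by simp
  also have "\<dots> = (\<Sum>v\<in>univ S. adj E S a v * (if p v then 1 else 0))"
    unfolding adj_def by (intro sum.cong) auto
  finally show ?thesis .
qed

lemma adj_sym: "is_graph sig ar E S \<Longrightarrow> adj E S x y = adj E S y x"
  unfolding adj_def is_graph_def by auto

lemma graph_ideg:
  fixes P :: "'b \<Rightarrow> 'a \<Rightarrow> real"
  assumes sA: "is_structure sig ar A" and sB: "is_structure sig ar B"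
    and gA: "is_graph sig ar E A" and gB: "is_graph sig ar E B"
    and dsP: "doubly_stochastic (univ B) (univ A) P"
    and PN: "\<forall>b\<in>univ B. \<forall>a\<in>univ A.
           (\<Sum>a'\<in>univ A. P b a' * adj E A a' a) = (\<Sum>b'\<in>univ B. adj E B b b' * P b' a)"
  shows "\<forall>b\<in>univ B. \<forall>a\<in>univ A. P b a > 0 \<longrightarrow> (\<forall>j\<le>k. ideg sig A j (Inl a) = ideg sig B j (Inl b))"
proof (induction k)
  case 0 then show ?case by simp
next
  case (Suc k)
  note fA = finite_univ[OF sA] and fB = finite_univ[OF sB]
  have step: "ideg sig A (Suc k) (Inl a) = ideg sig B (Suc k) (Inl b)"
    if b: "b \<in> univ B" and a: "a \<in> univ A" and pos: "P b a > 0" for a b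
  proof -
    have s: "ideg sig A (k - 1) (Inl a) = ideg sig B (k - 1) (Inl b)" using Suc.IH a b pos by auto
    have key: "card {v \<in> univ A. [a, v] \<in> rels A E \<and> \<phi> (ideg sig A (k - 1) (Inl v))} =
        card {v \<in> univ B. [b, v] \<in> rels B E \<and> \<phi> (ideg sig B (k - 1) (Inl v))}" for \<phi>
    proof -
      have c: "\<And>b a. b \<in> univ B \<Longrightarrow> a \<in> univ A \<Longrightarrow> P b a > 0 \<Longrightarrow>
          (if \<phi> (ideg sig A (k - 1) (Inl a)) then 1 else 0) = (if \<phi> (ideg sig B (k - 1) (Inl b)) then (1::real) else 0)"
        using Suc.IH by auto
      have "(\<Sum>v\<in>univ A. adj E A a v * (if \<phi> (ideg sig A (k - 1) (Inl v)) then 1 else 0)) =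
          (\<Sum>v\<in>univ B. adj E B b v * (if \<phi> (ideg sig B (k - 1) (Inl v)) then 1 else 0))"
        by (rule graph_step[OF fA fB dsP PN adj_sym[OF gA] adj_sym[OF gB] c b a pos])
      then show ?thesis unfolding card_adj[OF fA, symmetric] card_adj[OF fB, symmetric] by simp
    qed
    have "count (image_mset (\<lambda>c. (Mlab a c, ideg sig A k (Inr c)))
       (mset_set {c \<in> constraints sig A. a \<in> set (snd c)})) (l, t) =
       count (image_mset (\<lambda>c. (Mlab b c, ideg sig B k (Inr c)))
       (mset_set {c \<in> constraints sig B. b \<in> set (snd c)})) (l, t)" for l t
    proof (cases "fst l = {}")
      case True then show ?thesis unfolding count_el[OF sA] count_el[OF sB] by simp
    next
      case False
      show ?thesis unfolding count_el[OF sA] count_el[OF sB]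
        using False graph_count[OF gA sA a False, of k t] graph_count[OF gB sB b False, of k t]
          key[of "\<lambda>x. gE k E (ideg sig A (k - 1) (Inl a)) x = t"]
          key[of "\<lambda>x. gE k E x (ideg sig A (k - 1) (Inl a)) = t"] s
        by simp
    qed
    then show ?thesis unfolding ideg_Suc_Inl by (auto intro: multiset_eqI)
  qed
  show ?case
  proof (intro ballI impI allI)
    fix b a j assume b: "b \<in> univ B" and a: "a \<in> univ A" and pos: "P b a > 0" and j: "j \<le> Suc k"
    show "ideg sig A j (Inl a) = ideg sig B j (Inl b)"
    proof (cases "j = Suc k")
      case True then show ?thesis using step[OF b a pos] by simp
    next
      case False then show ?thesis using Suc.IH b a pos j by auto
    qed
  qed
qed

definition HE :: "'r \<Rightarrow> (nat \<Rightarrow> 'r deg) \<Rightarrow> (nat \<Rightarrow> 'r deg) \<Rightarrow> (nat \<Rightarrow> 'r deg)" where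
  "HE E X Y = (\<lambda>j. gE j E (X (j - 1)) (Y (j - 1)))"

lemma con_card_graph:
  assumes g: "is_graph sig ar E S" and sS: "is_structure sig ar S"
  shows "real (card {c \<in> constraints sig S. (\<lambda>j. ideg sig S j (Inr c)) = T}) =
    (\<Sum>u\<in>univ S. \<Sum>v\<in>univ S. adj E S u v *
        (if HE E (\<lambda>j. ideg sig S j (Inl u)) (\<lambda>j. ideg sig S j (Inl v)) = T then 1 else 0))"
proof -
  note gb = graph_basic[OF g sS]
  let ?F = "\<lambda>x. (\<lambda>j. ideg sig S j x)"
  let ?X = "{p \<in> univ S \<times> univ S. [fst p, snd p] \<in> rels S E \<and> HE E (?F (Inl (fst p))) (?F (Inl (snd p))) = T}"
  have fU: "finite (univ S)" using finite_univ[OF sS] .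
  have edge: "?F (Inr (E, [u, v])) = HE E (?F (Inl u)) (?F (Inl v))" if "[u, v] \<in> rels S E" for u v
    unfolding HE_def by (rule ext) (rule ideg_edge[OF g sS that])
  have seteq: "{c \<in> constraints sig S. ?F (Inr c) = T} = (\<lambda>p. (E, [fst p, snd p])) ` ?X"
  proof (intro equalityI subsetI)
    fix c assume "c \<in> {c \<in> constraints sig S. ?F (Inr c) = T}"
    then have c: "c \<in> constraints sig S" and T: "?F (Inr c) = T" by auto
    obtain u v where uv: "c = (E, [u, v])" "u \<noteq> v" "u \<in> univ S" "v \<in> univ S" "[u, v] \<in> rels S E"
      by (rule graph_con[OF g sS c])
    have X: "(u, v) \<in> ?X" using uv T edge[OF uv(5)] by simp
    have "c = (\<lambda>p. (E, [fst p, snd p])) (u, v)" using uv(1) by simp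
    from this X show "c \<in> (\<lambda>p. (E, [fst p, snd p])) ` ?X" by (rule image_eqI)
  next
    fix c assume "c \<in> (\<lambda>p. (E, [fst p, snd p])) ` ?X"
    then obtain u v where uv: "c = (E, [u, v])" "(u, v) \<in> ?X" by auto
    then have r: "[u, v] \<in> rels S E" by simp
    have "c \<in> constraints sig S" using uv(1) r gb(1) by auto
    then show "c \<in> {c \<in> constraints sig S. ?F (Inr c) = T}" using uv edge[OF r] by simp
  qed
  have inj: "inj_on (\<lambda>p. (E, [fst p, snd p])) ?X" by (rule inj_onI) (simp add: prod_eq_iff)
  have "real (card {c \<in> constraints sig S. ?F (Inr c) = T}) = real (card ?X)"
    unfolding seteq using card_image[OF inj] by simp
  also have "\<dots> = (\<Sum>p\<in>univ S \<times> univ S. if [fst p, snd p] \<in> rels S E \<and> HE E (?F (Inl (fst p))) (?F (Inl (snd p))) = T then 1 else 0)"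
    using card_eq_sum_indicator[of "univ S \<times> univ S"] fU by simp
  also have "\<dots> = (\<Sum>u\<in>univ S. \<Sum>v\<in>univ S. if [u, v] \<in> rels S E \<and> HE E (?F (Inl u)) (?F (Inl v)) = T then 1 else 0)"
    by (simp add: sum.cartesian_product split_def)
  also have "\<dots> = (\<Sum>u\<in>univ S. \<Sum>v\<in>univ S. adj E S u v *
        (if HE E (?F (Inl u)) (?F (Inl v)) = T then 1 else 0))"
    unfolding adj_def by (intro sum.cong refl) auto
  finally show ?thesis .
qed

lemma graph_imp_ids:
  assumes sA: "is_structure sig ar A" and sB: "is_structure sig ar B"
    and gA: "is_graph sig ar E A" and gB: "is_graph sig ar E B"
    and fg: "frac_iso_graph E A B"
  shows "iterated_degree_sequence sig A = iterated_degree_sequence sig B"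
proof -
  obtain P where dsP: "doubly_stochastic (univ B) (univ A) P"
    and PN: "\<forall>b\<in>univ B. \<forall>a\<in>univ A.
           (\<Sum>a'\<in>univ A. P b a' * adj E A a' a) = (\<Sum>b'\<in>univ B. adj E B b b' * P b' a)"
    using fg unfolding frac_iso_graph_def by blast
  note I = graph_ideg[OF sA sB gA gB dsP PN]
  note fA = finite_univ[OF sA] and fB = finite_univ[OF sB]
  have c1: "(\<lambda>j. ideg sig A j (Inl a)) = (\<lambda>j. ideg sig B j (Inl b))"
    if "b \<in> univ B" "a \<in> univ A" "P b a > 0" for a b
  proof
    fix j show "ideg sig A j (Inl a) = ideg sig B j (Inl b)" using I[where k=j] that by auto
  qed
  show ?thesis
  proof (rule multiset_eqI)
    fix T
    have e: "card {a \<in> univ A. (\<lambda>j. ideg sig A j (Inl a)) = T} = card {b \<in> univ B. (\<lambda>j. ideg sig B j (Inl b)) = T}"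
      using ds_card[OF fA fB dsP c1, where T=T] .
    have "real (card {c \<in> constraints sig A. (\<lambda>j. ideg sig A j (Inr c)) = T}) =
        real (card {c \<in> constraints sig B. (\<lambda>j. ideg sig B j (Inr c)) = T})"
      unfolding con_card_graph[OF gA sA] con_card_graph[OF gB sB]
      by (rule ds_trick[OF fA fB dsP PN c1])
    then have c: "card {c \<in> constraints sig A. (\<lambda>j. ideg sig A j (Inr c)) = T} =
        card {c \<in> constraints sig B. (\<lambda>j. ideg sig B j (Inr c)) = T}" by simp
    show "count (iterated_degree_sequence sig A) T = count (iterated_degree_sequence sig B) T"
      unfolding count_ids[OF sA] count_ids[OF sB] e c ..
  qed
qed

theorem theorem3p2:
  fixes sig :: "'r set" and ar :: "'r \<Rightarrow> nat"
    and A :: "('r, 'a) struc" and B :: "('r, 'b) struc"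
  assumes "is_structure sig ar A" and "is_structure sig ar B"
  shows "(frac_iso sig ar A B \<longleftrightarrow>
            iterated_degree_sequence sig A = iterated_degree_sequence sig B) \<and>
         (iterated_degree_sequence sig A = iterated_degree_sequence sig B \<longleftrightarrow>
            common_equitable_partition sig ar A B) \<and>
         (\<forall>E. is_graph sig ar E A \<longrightarrow> is_graph sig ar E B \<longrightarrow>
            (frac_iso_graph E A B \<longleftrightarrow> frac_iso sig ar A B))"
proof -
  note sA = assms(1) and sB = assms(2)
  have i12: "frac_iso sig ar A B \<Longrightarrow> iterated_degree_sequence sig A = iterated_degree_sequence sig B"
    using frac_iso_imp_ids[OF sA sB] .
  have i23: "iterated_degree_sequence sig A = iterated_degree_sequence sig B \<Longrightarrow> common_equitable_partition sig ar A B"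
    using ids_imp_cep[OF sA sB] .
  have i31: "common_equitable_partition sig ar A B \<Longrightarrow> frac_iso sig ar A B"
    using cep_imp_frac_iso[OF sA sB] .
  show ?thesis
  proof (intro conjI allI impI)
    show "frac_iso sig ar A B \<longleftrightarrow> iterated_degree_sequence sig A = iterated_degree_sequence sig B"
      using i12 i23 i31 by blast
    show "iterated_degree_sequence sig A = iterated_degree_sequence sig B \<longleftrightarrow> common_equitable_partition sig ar A B"
      using i12 i23 i31 by blast
    fix E assume gA: "is_graph sig ar E A" and gB: "is_graph sig ar E B"
    show "frac_iso_graph E A B \<longleftrightarrow> frac_iso sig ar A B"
      using frac_iso_imp_graph[OF sA sB gA gB] graph_imp_ids[OF sA sB gA gB] i23 i31 by blast
  qed
qed


end
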